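(* There exists a polynomial-time algorithm which, given an instance of SMG with asymmetric preferences, outputs a stable matching if the instance admits one, and otherwise correctly reports that no stable matching exists.
   Context: An instance of SMG consists of a set $B$ of $n$ men, a set $C$ of $n$ women, for each man $b\in B$ a strict total order $\succ_b$ on all of $C$, and for each woman $c\in C$ an arbitrary set $\mathcal{R}_c\subseteq B\times B$ (interpreted as: $(b,b')\in\mathcal{R}_c$ means $c$ prefers $b$ at least as much as $b'$; no transitivity or other property is assumed). Given a perfect matching $N$ between $B$ and $C$, a pair $(b,c)$ is blocking if $(b,c)\notin N$, $c\succ_b N(b)$, and $(N(c),b)\notin\mathcal{R}_c$. A stable matching is a perfect matching between $B$ and $C$ with no blocking pair. The instance has asymmetric preferences if for every $b_1,b_2\in B$ and $c\in C$, at most one of $(b_1,b_2)\in\mathcal{R}_c$ and $(b_2,b_1)\in\mathcal{R}_c$ holds. *)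

theory Defs
  imports Main
begin

text \<open>Men and women are both indexed by 0..<n.
  pref b c c' means c is strictly preferred to c' by man b (c \<succ>_b c').
  R c b b' means (b,b') \<in> R_c, i.e. woman c likes b at least as much as b'.\<close>

definition smg_instance :: "nat \<Rightarrow> (nat \<Rightarrow> nat \<Rightarrow> nat \<Rightarrow> bool) \<Rightarrow> (nat \<Rightarrow> nat \<Rightarrow> nat \<Rightarrow> bool) \<Rightarrow> bool" where
  "smg_instance n pref R \<longleftrightarrow>
     (\<forall>b<n. (\<forall>c<n. \<not> pref b c c)
          \<and> (\<forall>c1<n. \<forall>c2<n. \<forall>c3<n. pref b c1 c2 \<longrightarrow> pref b c2 c3 \<longrightarrow> pref b c1 c3)
          \<and> (\<forall>c1<n. \<forall>c2<n. c1 \<noteq> c2 \<longrightarrow> pref b c1 c2 \<or> pref b c2 c1))"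

definition asymmetric_prefs :: "nat \<Rightarrow> (nat \<Rightarrow> nat \<Rightarrow> nat \<Rightarrow> bool) \<Rightarrow> bool" where
  "asymmetric_prefs n R \<longleftrightarrow> (\<forall>b1<n. \<forall>b2<n. \<forall>c<n. \<not> (R c b1 b2 \<and> R c b2 b1))"

text \<open>A perfect matching is a list N of length n with N!b the woman matched to man b.\<close>

definition perfect_matching :: "nat \<Rightarrow> nat list \<Rightarrow> bool" where
  "perfect_matching n N \<longleftrightarrow> length N = n \<and> distinct N \<and> set N = {0..<n}"

definition partner_of :: "nat list \<Rightarrow> nat \<Rightarrow> nat" where
  "partner_of N c = (THE b. b < length N \<and> N ! b = c)"

definition blocking_pair :: "nat \<Rightarrow> (nat \<Rightarrow> nat \<Rightarrow> nat \<Rightarrow> bool) \<Rightarrow> (nat \<Rightarrow> nat \<Rightarrow> nat \<Rightarrow> bool)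
    \<Rightarrow> nat list \<Rightarrow> nat \<Rightarrow> nat \<Rightarrow> bool" where
  "blocking_pair n pref R N b c \<longleftrightarrow>
     b < n \<and> c < n \<and> N ! b \<noteq> c \<and> pref b c (N ! b) \<and> \<not> R c (partner_of N c) b"

definition stable_matching :: "nat \<Rightarrow> (nat \<Rightarrow> nat \<Rightarrow> nat \<Rightarrow> bool) \<Rightarrow> (nat \<Rightarrow> nat \<Rightarrow> nat \<Rightarrow> bool)
    \<Rightarrow> nat list \<Rightarrow> bool" where
  "stable_matching n pref R N \<longleftrightarrow>
     perfect_matching n N \<and> (\<nexists>b c. blocking_pair n pref R N b c)"

definition bit :: "bool \<Rightarrow> nat" where "bit P = (if P then 1 else 0)"

definition encode_smg :: "nat \<Rightarrow> (nat \<Rightarrow> nat \<Rightarrow> nat \<Rightarrow> bool) \<Rightarrow> (nat \<Rightarrow> nat \<Rightarrow> nat \<Rightarrow> bool) \<Rightarrow> nat list" where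
  "encode_smg n pref R =
     n # [bit (pref b c c'). b \<leftarrow> [0..<n], c \<leftarrow> [0..<n], c' \<leftarrow> [0..<n]]
       @ [bit (R c b b'). c \<leftarrow> [0..<n], b \<leftarrow> [0..<n], b' \<leftarrow> [0..<n]]"

definition correct_output :: "nat \<Rightarrow> (nat \<Rightarrow> nat \<Rightarrow> nat \<Rightarrow> bool) \<Rightarrow> (nat \<Rightarrow> nat \<Rightarrow> nat \<Rightarrow> bool)
    \<Rightarrow> nat list \<Rightarrow> bool" where
  "correct_output n pref R out \<longleftrightarrow>
     (\<exists>N. out = 1 # N \<and> stable_matching n pref R N)
     \<or> (out = [0] \<and> (\<nexists>N. stable_matching n pref R N))"

datatype instr =
    LoadC nat nat
  | Add nat nat nat
  | Sub nat nat nat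
  | LoadI nat nat
  | StoreI nat nat
  | Jz nat nat
  | Halt

type_synonym config = "nat \<times> (nat \<Rightarrow> nat)"

definition halted :: "instr list \<Rightarrow> config \<Rightarrow> bool" where
  "halted prog cf \<longleftrightarrow> fst cf \<ge> length prog \<or> prog ! fst cf = Halt"

fun exec :: "instr \<Rightarrow> config \<Rightarrow> config" where
  "exec (LoadC r k) (pc, m) = (Suc pc, m(r := k))"
| "exec (Add r a b) (pc, m) = (Suc pc, m(r := m a + m b))"
| "exec (Sub r a b) (pc, m) = (Suc pc, m(r := m a - m b))"
| "exec (LoadI r a) (pc, m) = (Suc pc, m(r := m (m a)))"
| "exec (StoreI r a) (pc, m) = (Suc pc, m(m r := m a))"
| "exec (Jz r l) (pc, m) = (if m r = 0 then l else Suc pc, m)"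
| "exec Halt (pc, m) = (pc, m)"

definition step :: "instr list \<Rightarrow> config \<Rightarrow> config" where
  "step prog cf = (if halted prog cf then cf else exec (prog ! fst cf) cf)"

definition run :: "instr list \<Rightarrow> nat \<Rightarrow> config \<Rightarrow> config" where
  "run prog t cf = (step prog ^^ t) cf"

definition init_config :: "nat list \<Rightarrow> config" where
  "init_config xs = (0, \<lambda>i. if i = 0 then length xs else if i \<le> length xs then xs ! (i - 1) else 0)"

definition output_of :: "config \<Rightarrow> nat list" where
  "output_of cf = map (\<lambda>i. snd cf (Suc i)) [0..<snd cf 0]"

end

theory Submission
  imports Defs
begin


definition bx :: "instr \<Rightarrow> (nat \<Rightarrow> nat) \<Rightarrow> (nat \<Rightarrow> nat)" where
  "bx i m = snd (exec i (0, m))"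

lemma bx_simps[simp]:
  "bx (LoadC r k) m = m(r := k)"
  "bx (Add r a b) m = m(r := m a + m b)"
  "bx (Sub r a b) m = m(r := m a - m b)"
  "bx (LoadI r a) m = m(r := m (m a))"
  "bx (StoreI r a) m = m(m r := m a)"
  by (simp_all add: bx_def)

fun is_basic :: "instr \<Rightarrow> bool" where
  "is_basic (LoadC r k) = True"
| "is_basic (Add r a b) = True"
| "is_basic (Sub r a b) = True"
| "is_basic (LoadI r a) = True"
| "is_basic (StoreI r a) = True"
| "is_basic _ = False"

datatype com = Blk "instr list" | Seq com com | IfNZ nat com | DoWhile com nat

fun execs :: "instr list \<Rightarrow> (nat \<Rightarrow> nat) \<Rightarrow> (nat \<Rightarrow> nat)" where
  "execs [] m = m"
| "execs (i # xs) m = execs xs (bx i m)"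

fun clen :: "com \<Rightarrow> nat" where
  "clen (Blk xs) = length xs"
| "clen (Seq c1 c2) = clen c1 + clen c2"
| "clen (IfNZ r c) = Suc (clen c)"
| "clen (DoWhile c z) = Suc (clen c)"

fun comp :: "nat \<Rightarrow> com \<Rightarrow> instr list" where
  "comp p (Blk xs) = xs"
| "comp p (Seq c1 c2) = comp p c1 @ comp (p + clen c1) c2"
| "comp p (IfNZ r c) = Jz r (p + 1 + clen c) # comp (Suc p) c"
| "comp p (DoWhile c z) = comp p c @ [Jz z p]"

lemma length_comp[simp]: "length (comp p c) = clen c"
  by (induction c arbitrary: p) auto

inductive big :: "com \<Rightarrow> (nat \<Rightarrow> nat) \<Rightarrow> nat \<Rightarrow> (nat \<Rightarrow> nat) \<Rightarrow> bool" where
  Blk: "list_all is_basic xs \<Longrightarrow> big (Blk xs) m (length xs) (execs xs m)"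
| Seq: "big c1 m t1 m1 \<Longrightarrow> big c2 m1 t2 m2 \<Longrightarrow> big (Seq c1 c2) m (t1 + t2) m2"
| IfZ: "m r = 0 \<Longrightarrow> big (IfNZ r c) m 1 m"
| IfN: "m r \<noteq> 0 \<Longrightarrow> big c m t m' \<Longrightarrow> big (IfNZ r c) m (Suc t) m'"
| DwE: "big c m t m' \<Longrightarrow> m' z \<noteq> 0 \<Longrightarrow> big (DoWhile c z) m (Suc t) m'"
| DwL: "big c m t m' \<Longrightarrow> m' z = 0 \<Longrightarrow> big (DoWhile c z) m' t2 m2 \<Longrightarrow> big (DoWhile c z) m (Suc t + t2) m2"

definition code_at :: "instr list \<Rightarrow> nat \<Rightarrow> instr list \<Rightarrow> bool" where
  "code_at prog p cs \<longleftrightarrow> p + length cs \<le> length prog \<and> (\<forall>i<length cs. prog ! (p + i) = cs ! i)"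

lemma code_at_app1: "code_at prog p (xs @ ys) \<Longrightarrow> code_at prog p xs"
  by (auto simp: code_at_def nth_append)

lemma code_at_app2: "code_at prog p (xs @ ys) \<Longrightarrow> code_at prog (p + length xs) ys"
  unfolding code_at_def
proof safe
  assume a: "p + length (xs @ ys) \<le> length prog" "\<forall>i<length (xs @ ys). prog ! (p + i) = (xs @ ys) ! i"
  show "p + length xs + length ys \<le> length prog" using a by simp
  fix i assume "i < length ys"
  then have "prog ! (p + (length xs + i)) = (xs @ ys) ! (length xs + i)" using a by simp
  then show "prog ! (p + length xs + i) = ys ! i" by (simp add: add.assoc)
qed

lemma code_at_cons1: "code_at prog p (x # ys) \<Longrightarrow> prog ! p = x \<and> p < length prog"
  unfolding code_at_def
proof -
  assume a: "p + length (x # ys) \<le> length prog \<and> (\<forall>i<length (x # ys). prog ! (p + i) = (x # ys) ! i)"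
  then have "prog ! (p + 0) = (x # ys) ! 0" by blast
  then show ?thesis using a by simp
qed

lemma code_at_cons2: "code_at prog p (x # ys) \<Longrightarrow> code_at prog (Suc p) ys"
  using code_at_app2[of prog p "[x]" ys] by simp

lemma run_add: "run prog (a + b) cf = run prog b (run prog a cf)"
  unfolding run_def by (subst add.commute) (simp add: funpow_add)

lemma run_0[simp]: "run prog 0 cf = cf"
  by (simp add: run_def)

lemma run_1: "p < length prog \<Longrightarrow> prog ! p \<noteq> Halt \<Longrightarrow> run prog (Suc 0) (p, m) = exec (prog ! p) (p, m)"
  by (simp add: run_def step_def halted_def)

lemma exec_basic: "is_basic i \<Longrightarrow> exec i (p, m) = (Suc p, bx i m)"
  by (cases i) (auto simp: bx_def)

lemma run_execs: "list_all is_basic xs \<Longrightarrow> code_at prog p xs \<Longrightarrow> run prog (length xs) (p, m) = (p + length xs, execs xs m)"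
proof (induction xs arbitrary: p m)
  case Nil then show ?case by simp
next
  case (Cons i xs)
  have c1: "prog ! p = i" "p < length prog" using code_at_cons1[OF Cons.prems(2)] by auto
  have hb: "is_basic i" using Cons.prems by simp
  have "i \<noteq> Halt" using hb by auto
  have "run prog (1 + length xs) (p, m) = run prog (length xs) (run prog 1 (p, m))" by (rule run_add)
  also have "run prog 1 (p, m) = (Suc p, bx i m)" using run_1[of p prog m] c1 \<open>i \<noteq> Halt\<close> exec_basic[OF hb] by (simp add: One_nat_def)
  also have "run prog (length xs) (Suc p, bx i m) = (Suc p + length xs, execs xs (bx i m))"
  proof -
    have "list_all is_basic xs" using Cons.prems(1) by simp
    moreover have "code_at prog (Suc p) xs" using code_at_cons2[OF Cons.prems(2)] .
    ultimately show ?thesis using Cons.IH[of "Suc p" "bx i m"] by simp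
  qed
  finally show ?case by simp
qed

theorem big_run: "big c m t m' \<Longrightarrow> code_at prog p (comp p c) \<Longrightarrow> run prog t (p, m) = (p + clen c, m')"
proof (induction arbitrary: p rule: big.induct)
  case (Blk xs m) then show ?case using run_execs by simp
next
  case (Seq c1 m t1 m1 c2 t2 m2)
  have a: "code_at prog p (comp p c1)" using Seq.prems code_at_app1 by simp
  have b: "code_at prog (p + clen c1) (comp (p + clen c1) c2)" using Seq.prems code_at_app2[of prog p "comp p c1"] by simp
  show ?case using Seq.IH(1)[OF a] Seq.IH(2)[OF b] by (simp add: run_add)
next
  case (IfZ m r c)
  have "prog ! p = Jz r (p + 1 + clen c)" "p < length prog" using code_at_cons1 IfZ.prems by auto
  then show ?case using IfZ.hyps by (simp add: run_1 One_nat_def)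
next
  case (IfN m r c t m')
  have h: "prog ! p = Jz r (p + 1 + clen c)" "p < length prog" using code_at_cons1 IfN.prems by auto
  have r1: "run prog 1 (p, m) = (Suc p, m)" using h IfN.hyps by (simp add: run_1 One_nat_def)
  have "code_at prog (Suc p) (comp (Suc p) c)" using IfN.prems code_at_cons2 by simp
  then have "run prog t (Suc p, m) = (Suc p + clen c, m')" using IfN.IH by simp
  then show ?case using r1 run_add[of prog 1 t] by simp
next
  case (DwE c m t m' z)
  have a: "code_at prog p (comp p c)" using DwE.prems code_at_app1 by simp
  have b: "code_at prog (p + clen c) [Jz z p]" using DwE.prems code_at_app2[of prog p "comp p c"] by simp
  have h: "prog ! (p + clen c) = Jz z p" "p + clen c < length prog" using code_at_cons1[OF b] by auto
  have "run prog (t + 1) (p, m) = run prog 1 (p + clen c, m')" using DwE.IH[OF a] run_add by metis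
  also have "\<dots> = (Suc (p + clen c), m')" using h DwE.hyps by (simp add: run_1 One_nat_def)
  finally show ?case by simp
next
  case (DwL c m t m' z t2 m2)
  have a: "code_at prog p (comp p c)" using DwL.prems code_at_app1 by simp
  have b: "code_at prog (p + clen c) [Jz z p]" using DwL.prems code_at_app2[of prog p "comp p c"] by simp
  have h: "prog ! (p + clen c) = Jz z p" "p + clen c < length prog" using code_at_cons1[OF b] by auto
  have "run prog (t + 1 + t2) (p, m) = run prog t2 (run prog 1 (run prog t (p, m)))" by (simp only: run_add)
  also have "run prog t (p, m) = (p + clen c, m')" using DwL.IH(1)[OF a] .
  also have "run prog 1 (p + clen c, m') = (p, m')" using h DwL.hyps by (simp add: run_1 One_nat_def)
  also have "run prog t2 (p, m') = (p + clen (DoWhile c z), m2)" using DwL.IH(2)[OF DwL.prems] .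
  finally show ?case by (simp add: add.commute)
qed

corollary big_prog: "big c m t m' \<Longrightarrow> halted (comp 0 c) (run (comp 0 c) t (0, m)) \<and> run (comp 0 c) t (0, m) = (clen c, m')"
  using big_run[of c m t m' "comp 0 c" 0] by (simp add: code_at_def halted_def)

definition HT :: "((nat \<Rightarrow> nat) \<Rightarrow> bool) \<Rightarrow> com \<Rightarrow> nat \<Rightarrow> ((nat \<Rightarrow> nat) \<Rightarrow> bool) \<Rightarrow> bool" where
  "HT P c k Q \<longleftrightarrow> (\<forall>m. P m \<longrightarrow> (\<exists>t m'. big c m t m' \<and> t \<le> k \<and> Q m'))"

lemma HT_blk: "list_all is_basic xs \<Longrightarrow> HT (\<lambda>m. Q (execs xs m)) (Blk xs) (length xs) Q"
  unfolding HT_def using big.Blk by blast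

lemma HT_blk': "list_all is_basic xs \<Longrightarrow> (\<And>m. P m \<Longrightarrow> Q (execs xs m)) \<Longrightarrow> length xs \<le> k \<Longrightarrow> HT P (Blk xs) k Q"
  unfolding HT_def using big.Blk by blast

lemma HT_seq: "HT P c1 k1 Q \<Longrightarrow> HT Q c2 k2 R \<Longrightarrow> HT P (Seq c1 c2) (k1 + k2) R"
  unfolding HT_def by (meson add_le_mono big.Seq)

lemma HT_seq': "HT P c1 k1 Q \<Longrightarrow> HT Q c2 k2 R \<Longrightarrow> k1 + k2 \<le> k \<Longrightarrow> HT P (Seq c1 c2) k R"
  unfolding HT_def by (metis (no_types, lifting) add_le_mono big.Seq order_trans)

lemma HT_conseq: "HT P c k Q \<Longrightarrow> (\<And>m. P' m \<Longrightarrow> P m) \<Longrightarrow> (\<And>m. Q m \<Longrightarrow> Q' m) \<Longrightarrow> k \<le> k' \<Longrightarrow> HT P' c k' Q'"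
  unfolding HT_def by (meson order_trans)

lemma HT_if: "HT (\<lambda>m. P m \<and> m r \<noteq> 0) c k Q \<Longrightarrow> (\<And>m. P m \<Longrightarrow> m r = 0 \<Longrightarrow> Q m) \<Longrightarrow> Suc k \<le> k' \<Longrightarrow> HT P (IfNZ r c) k' Q"
  unfolding HT_def
proof (intro allI impI)
  fix m assume a: "\<forall>m. P m \<and> m r \<noteq> 0 \<longrightarrow> (\<exists>t m'. big c m t m' \<and> t \<le> k \<and> Q m')" "(\<And>m. P m \<Longrightarrow> m r = 0 \<Longrightarrow> Q m)" "Suc k \<le> k'" "P m"
  show "\<exists>t m'. big (IfNZ r c) m t m' \<and> t \<le> k' \<and> Q m'"
  proof (cases "m r = 0")
    case True
    have "big (IfNZ r c) m 1 m" using big.IfZ[of m r c] True by simp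
    moreover have "1 \<le> k'" using a(3) by simp
    ultimately show ?thesis using a(2)[OF a(4) True] by blast
  next
    case False
    then obtain t m' where "big c m t m'" "t \<le> k" "Q m'" using a by blast
    then show ?thesis using big.IfN[of m r c t m'] False a(3) by (intro exI[of _ "Suc t"] exI[of _ m']) auto
  qed
qed

lemma HT_dowhile:
  assumes body: "\<And>i. i < N \<Longrightarrow> HT (Inv i) c k (\<lambda>m. Inv (Suc i) m \<and> (m z = 0 \<longleftrightarrow> Suc i < N))"
  shows "i < N \<Longrightarrow> HT (Inv i) (DoWhile c z) ((N - i) * Suc k) (Inv N)"
proof (induction "N - i" arbitrary: i)
  case 0 then show ?case by simp
next
  case (Suc x)
  show ?case unfolding HT_def
  proof (intro allI impI)
    fix m assume im: "Inv i m"
    have h: "\<forall>m. Inv i m \<longrightarrow> (\<exists>t m'. big c m t m' \<and> t \<le> k \<and> (Inv (Suc i) m' \<and> (m' z = 0 \<longleftrightarrow> Suc i < N)))"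
      using body[OF Suc.prems] unfolding HT_def .
    have ex: "\<exists>t m'. big c m t m' \<and> t \<le> k \<and> (Inv (Suc i) m' \<and> (m' z = 0 \<longleftrightarrow> Suc i < N))"
      using mp[OF spec[OF h, of m] im] .
    then obtain t m' where bm0: "big c m t m' \<and> t \<le> k \<and> (Inv (Suc i) m' \<and> (m' z = 0 \<longleftrightarrow> Suc i < N))"
      by (elim exE)
    have bm: "big c m t m'" "t \<le> k" "Inv (Suc i) m'" "m' z = 0 \<longleftrightarrow> Suc i < N" using bm0 by auto
    show "\<exists>t m'. big (DoWhile c z) m t m' \<and> t \<le> (N - i) * Suc k \<and> Inv N m'"
    proof (cases "Suc i < N")
      case True
      have "HT (Inv (Suc i)) (DoWhile c z) ((N - Suc i) * Suc k) (Inv N)"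
        using Suc.hyps(1)[of "Suc i"] Suc.hyps(2) True by simp
      then obtain t2 m2 where "big (DoWhile c z) m' t2 m2" "t2 \<le> (N - Suc i) * Suc k" "Inv N m2"
        using bm unfolding HT_def by blast
      moreover have "Suc t + t2 \<le> (N - i) * Suc k"
      proof -
        have "N - i = Suc (N - Suc i)" using True by simp
        then show ?thesis using \<open>t2 \<le> _\<close> bm(2) by simp
      qed
      ultimately show ?thesis using big.DwL[OF bm(1)] bm(4) True by blast
    next
      case False
      then have "N = Suc i" using Suc.prems by simp
      then have "m' z \<noteq> 0" using bm(4) by simp
      then have "big (DoWhile c z) m (Suc t) m'" using big.DwE[OF bm(1)] by simp
      moreover have "Suc t \<le> (N - i) * Suc k" using \<open>N = Suc i\<close> bm(2) by simp
      ultimately show ?thesis using bm(3) \<open>N = Suc i\<close> by blast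
    qed
  qed
qed



definition scanf :: "(nat \<Rightarrow> nat \<Rightarrow> nat \<Rightarrow> bool) \<Rightarrow> (nat \<Rightarrow> nat \<Rightarrow> bool) \<Rightarrow> nat \<Rightarrow> nat \<Rightarrow> nat \<Rightarrow> nat" where
  "scanf P D b cur c = (if \<not> D b c \<and> (cur = 0 \<or> P b c (cur - 1)) then Suc c else cur)"

definition scan :: "(nat \<Rightarrow> nat \<Rightarrow> nat \<Rightarrow> bool) \<Rightarrow> (nat \<Rightarrow> nat \<Rightarrow> bool) \<Rightarrow> nat \<Rightarrow> nat \<Rightarrow> nat" where
  "scan P D b k = foldl (scanf P D b) 0 [0..<k]"

definition cnd :: "(nat \<Rightarrow> nat \<Rightarrow> nat \<Rightarrow> bool) \<Rightarrow> nat \<Rightarrow> nat \<Rightarrow> nat \<Rightarrow> bool" where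
  "cnd P b t c \<longleftrightarrow> (t = 0 \<or> c = t - 1 \<or> P b c (t - 1))"

definition stepb :: "nat \<Rightarrow> (nat \<Rightarrow> nat \<Rightarrow> nat \<Rightarrow> bool) \<Rightarrow> (nat \<Rightarrow> nat \<Rightarrow> nat \<Rightarrow> bool) \<Rightarrow> (nat \<Rightarrow> nat \<Rightarrow> bool) \<Rightarrow> nat \<Rightarrow> (nat \<Rightarrow> nat \<Rightarrow> bool)" where
  "stepb n P R D b = (\<lambda>x y. D x y \<or> (x < n \<and> y < n \<and> x \<noteq> b \<and> cnd P b (scan P D b n) y \<and> \<not> R y x b))"

definition rnd :: "nat \<Rightarrow> (nat \<Rightarrow> nat \<Rightarrow> nat \<Rightarrow> bool) \<Rightarrow> (nat \<Rightarrow> nat \<Rightarrow> nat \<Rightarrow> bool) \<Rightarrow> (nat \<Rightarrow> nat \<Rightarrow> bool) \<Rightarrow> (nat \<Rightarrow> nat \<Rightarrow> bool)" where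
  "rnd n P R D = foldl (stepb n P R) D [0..<n]"

definition Dfin :: "nat \<Rightarrow> (nat \<Rightarrow> nat \<Rightarrow> nat \<Rightarrow> bool) \<Rightarrow> (nat \<Rightarrow> nat \<Rightarrow> nat \<Rightarrow> bool) \<Rightarrow> (nat \<Rightarrow> nat \<Rightarrow> bool)" where
  "Dfin n P R = (rnd n P R ^^ (n * n)) (\<lambda>_ _. False)"

definition result :: "nat \<Rightarrow> (nat \<Rightarrow> nat \<Rightarrow> nat \<Rightarrow> bool) \<Rightarrow> (nat \<Rightarrow> nat \<Rightarrow> nat \<Rightarrow> bool) \<Rightarrow> nat list" where
  "result n P R = (if (\<exists>b<n. scan P (Dfin n P R) b n = 0) then [0]
     else 1 # map (\<lambda>b. scan P (Dfin n P R) b n - 1) [0..<n])"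

lemma scan_Suc: "scan P D b (Suc k) = scanf P D b (scan P D b k) k"
  by (simp add: scan_def)

lemma scan_0[simp]: "scan P D b 0 = 0"
  by (simp add: scan_def)

lemma scan_le: "scan P D b k \<le> k"
  by (induction k) (auto simp: scan_Suc scanf_def)

locale inst =
  fixes n :: nat and P :: "nat \<Rightarrow> nat \<Rightarrow> nat \<Rightarrow> bool" and R :: "nat \<Rightarrow> nat \<Rightarrow> nat \<Rightarrow> bool"
  assumes smg: "smg_instance n P R" and asym: "asymmetric_prefs n R"
begin

lemma irr: "b < n \<Longrightarrow> c < n \<Longrightarrow> \<not> P b c c"
  using smg unfolding smg_instance_def by blast

lemma trn: "b < n \<Longrightarrow> c1 < n \<Longrightarrow> c2 < n \<Longrightarrow> c3 < n \<Longrightarrow> P b c1 c2 \<Longrightarrow> P b c2 c3 \<Longrightarrow> P b c1 c3"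
  using smg unfolding smg_instance_def by blast

lemma tot: "b < n \<Longrightarrow> c1 < n \<Longrightarrow> c2 < n \<Longrightarrow> c1 \<noteq> c2 \<Longrightarrow> P b c1 c2 \<or> P b c2 c1"
  using smg unfolding smg_instance_def by blast

lemma asy: "b1 < n \<Longrightarrow> b2 < n \<Longrightarrow> c < n \<Longrightarrow> R c b1 b2 \<Longrightarrow> \<not> R c b2 b1"
  using asym unfolding asymmetric_prefs_def by blast

lemma anti: "b < n \<Longrightarrow> c1 < n \<Longrightarrow> c2 < n \<Longrightarrow> P b c1 c2 \<Longrightarrow> \<not> P b c2 c1"
  using trn irr by blast

lemma scan_props:
  assumes "b < n" "k \<le> n"
  shows "(scan P D b k = 0 \<longleftrightarrow> (\<forall>c<k. D b c)) \<and>
    (scan P D b k \<noteq> 0 \<longrightarrow> scan P D b k - 1 < k \<and> \<not> D b (scan P D b k - 1) \<and>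
       (\<forall>c<k. \<not> D b c \<longrightarrow> c \<noteq> scan P D b k - 1 \<longrightarrow> P b (scan P D b k - 1) c))"
  using assms(2)
proof (induction k)
  case 0 then show ?case by simp
next
  case (Suc k)
  define cur where "cur = scan P D b k"
  have IH: "(cur = 0 \<longleftrightarrow> (\<forall>c<k. D b c)) \<and> (cur \<noteq> 0 \<longrightarrow> cur - 1 < k \<and> \<not> D b (cur - 1) \<and>
       (\<forall>c<k. \<not> D b c \<longrightarrow> c \<noteq> cur - 1 \<longrightarrow> P b (cur - 1) c))"
    using Suc.IH[OF Suc_leD[OF Suc.prems]] unfolding cur_def .
  have kn: "k < n" using Suc.prems by simp
  have s: "scan P D b (Suc k) = scanf P D b cur k" by (simp add: scan_Suc cur_def)
  show ?case
  proof (cases "D b k")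
    case True
    then have "scan P D b (Suc k) = cur" using s by (simp add: scanf_def)
    then show ?thesis using IH True by (auto simp: less_Suc_eq)
  next
    case nd: False
    show ?thesis
    proof (cases "cur = 0")
      case True
      then have "scan P D b (Suc k) = Suc k" using s nd by (simp add: scanf_def)
      then show ?thesis using IH True nd by (auto simp: less_Suc_eq)
    next
      case cn: False
      show ?thesis
      proof (cases "P b k (cur - 1)")
        case True
        then have e: "scan P D b (Suc k) = Suc k" using s nd by (simp add: scanf_def)
        have "\<forall>c<Suc k. \<not> D b c \<longrightarrow> c \<noteq> k \<longrightarrow> P b k c"
        proof (intro allI impI)
          fix c assume c: "c < Suc k" "\<not> D b c" "c \<noteq> k"
          then have ck: "c < k" by simp
          show "P b k c"
          proof (cases "c = cur - 1")
            case True then show ?thesis using \<open>P b k (cur - 1)\<close> by simp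
          next
            case False
            then have "P b (cur - 1) c" using IH cn ck c by blast
            then show ?thesis using trn[OF \<open>b < n\<close> kn, of "cur - 1" c] \<open>P b k (cur - 1)\<close> IH cn kn ck by simp
          qed
        qed
        then show ?thesis using e nd by auto
      next
        case False
        then have e: "scan P D b (Suc k) = cur" using s cn by (simp add: scanf_def)
        have "P b (cur - 1) k" using tot[OF \<open>b < n\<close>, of k "cur - 1"] False IH cn kn by auto
        then show ?thesis using e IH cn nd by (auto simp: less_Suc_eq)
      qed
    qed
  qed
qed

lemma scan_zero: "b < n \<Longrightarrow> scan P D b n = 0 \<longleftrightarrow> (\<forall>c<n. D b c)"
proof -
  assume a: "b < n"
  have h: "(scan P D b n = 0 \<longleftrightarrow> (\<forall>c<n. D b c)) \<and> True"
    using scan_props[OF a, of n D] by simp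
  then show ?thesis by blast
qed

lemma scan_top: "b < n \<Longrightarrow> scan P D b n \<noteq> 0 \<Longrightarrow>
   scan P D b n - 1 < n \<and> \<not> D b (scan P D b n - 1) \<and>
   (\<forall>c<n. \<not> D b c \<longrightarrow> c \<noteq> scan P D b n - 1 \<longrightarrow> P b (scan P D b n - 1) c)"
proof -
  assume a: "b < n" "scan P D b n \<noteq> 0"
  have h: "(scan P D b n = 0 \<longleftrightarrow> (\<forall>c<n. D b c)) \<and>
    (scan P D b n \<noteq> 0 \<longrightarrow> scan P D b n - 1 < n \<and> \<not> D b (scan P D b n - 1) \<and>
       (\<forall>c<n. \<not> D b c \<longrightarrow> c \<noteq> scan P D b n - 1 \<longrightarrow> P b (scan P D b n - 1) c))"
    using a(1) by (rule scan_props) simp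
  then show ?thesis using a(2) by blast
qed

lemma stable_facts:
  assumes "stable_matching n P R N"
  shows "length N = n" "distinct N" "set N = {0..<n}" "\<And>b. b < n \<Longrightarrow> N ! b < n"
    "\<And>b c. \<not> blocking_pair n P R N b c"
proof -
  have pm: "length N = n" "distinct N" "set N = {0..<n}" and nb: "\<nexists>b c. blocking_pair n P R N b c"
    using assms unfolding stable_matching_def perfect_matching_def by auto
  show "length N = n" "distinct N" "set N = {0..<n}" using pm by auto
  show "\<And>b c. \<not> blocking_pair n P R N b c" using nb by blast
  fix b assume "b < n"
  then have "N ! b \<in> set N" using pm(1) by simp
  then show "N ! b < n" using pm(3) by simp
qed

lemma partner_eq: "distinct N \<Longrightarrow> x < length N \<Longrightarrow> partner_of N (N ! x) = x"
  unfolding partner_of_def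
  by (rule the_equality) (auto simp: nth_eq_iff_index_eq)

definition sound :: "(nat \<Rightarrow> nat \<Rightarrow> bool) \<Rightarrow> bool" where
  "sound D \<longleftrightarrow> (\<forall>N. stable_matching n P R N \<longrightarrow> (\<forall>b<n. \<not> D b (N ! b)))"

lemma sound_step:
  assumes sd: "sound D" and b: "b < n"
  shows "sound (stepb n P R D b)"
  unfolding sound_def
proof (intro allI impI)
  fix N b' assume st: "stable_matching n P R N" and b': "b' < n"
  note sf = stable_facts[OF st]
  show "\<not> stepb n P R D b b' (N ! b')"
  proof
    assume "stepb n P R D b b' (N ! b')"
    moreover have nd: "\<not> D b' (N ! b')" using sd st b' unfolding sound_def by blast
    ultimately have h: "b' \<noteq> b" "cnd P b (scan P D b n) (N ! b')" "\<not> R (N ! b') b' b"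
      unfolding stepb_def by auto
    define y where "y = N ! b'"
    have yn: "y < n" using sf(4)[OF b'] y_def by simp
    have ndb: "\<not> D b (N ! b)" using sd st b unfolding sound_def by blast
    have bn: "N ! b < n" using sf(4)[OF b] .
    have sc: "scan P D b n \<noteq> 0" using scan_zero[OF b, of D] ndb bn by auto
    define t where "t = scan P D b n - 1"
    have top: "t < n" "\<not> D b t" "\<forall>c<n. \<not> D b c \<longrightarrow> c \<noteq> t \<longrightarrow> P b t c"
      using scan_top[OF b sc] t_def by auto
    have cy: "y = t \<or> P b y t" using h(2) sc unfolding cnd_def t_def y_def by auto
    have nbt: "N ! b = t \<or> P b t (N ! b)" using top ndb bn by blast
    have pbt: "P b y (N ! b) \<or> y = N ! b"
      using cy nbt trn[OF b yn top(1) bn] by auto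
    have "y \<noteq> N ! b"
    proof
      assume "y = N ! b"
      then have "N ! b' = N ! b" using y_def by simp
      then show False using h(1) sf(2) sf(1) b b' nth_eq_iff_index_eq by metis
    qed
    then have pb: "P b y (N ! b)" using pbt by simp
    have part: "partner_of N y = b'" using partner_eq[OF sf(2)] sf(1) b' y_def by simp
    have "blocking_pair n P R N b y"
      unfolding blocking_pair_def using b yn \<open>y \<noteq> N ! b\<close> pb part h(3) y_def by auto
    then show False using sf(5) by blast
  qed
qed

lemma sound_rnd_aux: "sound D \<Longrightarrow> \<forall>b\<in>set bs. b < n \<Longrightarrow> sound (foldl (stepb n P R) D bs)"
  by (induction bs arbitrary: D) (auto intro: sound_step)

lemma sound_rnd: "sound D \<Longrightarrow> sound (rnd n P R D)"
  unfolding rnd_def by (rule sound_rnd_aux) auto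

lemma sound_iter: "sound ((rnd n P R ^^ k) (\<lambda>_ _. False))"
proof (induction k)
  case 0 then show ?case by (simp add: sound_def)
next
  case (Suc k) then show ?case by (simp add: sound_rnd)
qed

lemma stepb_mono: "D \<le> stepb n P R D b"
  unfolding stepb_def le_fun_def by simp

lemma foldl_mono: "D \<le> foldl (stepb n P R) D bs"
proof (induction bs arbitrary: D)
  case Nil then show ?case by simp
next
  case (Cons b bs)
  have "stepb n P R D b \<le> foldl (stepb n P R) (stepb n P R D b) bs" by (rule Cons.IH)
  then have "D \<le> foldl (stepb n P R) (stepb n P R D b) bs" using stepb_mono[of D b] by (rule order_trans[rotated])
  then show ?case by simp
qed

lemma fix_aux: "foldl (stepb n P R) D bs = D \<Longrightarrow> b \<in> set bs \<Longrightarrow> stepb n P R D b = D"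
proof (induction bs arbitrary: D)
  case Nil then show ?case by simp
next
  case (Cons b0 bs)
  have "stepb n P R D b0 \<le> foldl (stepb n P R) (stepb n P R D b0) bs" by (rule foldl_mono)
  then have "stepb n P R D b0 \<le> D" using Cons.prems by simp
  then have e: "stepb n P R D b0 = D" using stepb_mono[of D b0] by simp
  show ?case
  proof (cases "b = b0")
    case True then show ?thesis using e by simp
  next
    case False then show ?thesis using Cons e by auto
  qed
qed

lemma fix_step: "rnd n P R D = D \<Longrightarrow> b < n \<Longrightarrow> stepb n P R D b = D"
  unfolding rnd_def using fix_aux by auto

definition inbox :: "(nat \<Rightarrow> nat \<Rightarrow> bool) \<Rightarrow> bool" where
  "inbox D \<longleftrightarrow> (\<forall>x y. D x y \<longrightarrow> x < n \<and> y < n)"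

definition cnt :: "(nat \<Rightarrow> nat \<Rightarrow> bool) \<Rightarrow> nat" where
  "cnt D = card {(x, y). x < n \<and> y < n \<and> D x y}"

lemma inbox_step: "inbox D \<Longrightarrow> inbox (stepb n P R D b)"
  unfolding inbox_def stepb_def by auto

lemma inbox_fold: "inbox D \<Longrightarrow> inbox (foldl (stepb n P R) D bs)"
  by (induction bs arbitrary: D) (auto intro: inbox_step)

lemma inbox_rnd: "inbox D \<Longrightarrow> inbox (rnd n P R D)"
  unfolding rnd_def by (rule inbox_fold)

lemma inbox_iter: "inbox ((rnd n P R ^^ k) (\<lambda>_ _. False))"
proof (induction k)
  case 0 then show ?case by (simp add: inbox_def)
next
  case (Suc k) then show ?case by (simp add: inbox_rnd)
qed

lemma box_fin: "finite {(x, y). x < n \<and> y < n \<and> D x y}"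
proof -
  have "{(x, y). x < n \<and> y < n \<and> D x y} \<subseteq> {..<n} \<times> {..<n}" by auto
  then show ?thesis using finite_subset by blast
qed

lemma cnt_le: "cnt D \<le> n * n"
proof -
  have "{(x, y). x < n \<and> y < n \<and> D x y} \<subseteq> {..<n} \<times> {..<n}" by auto
  then have "cnt D \<le> card ({..<n} \<times> {..<n})" unfolding cnt_def by (intro card_mono) auto
  then show ?thesis by (simp add: card_cartesian_product)
qed

lemma cnt_less: "inbox D \<Longrightarrow> inbox D' \<Longrightarrow> D \<le> D' \<Longrightarrow> D \<noteq> D' \<Longrightarrow> cnt D < cnt D'"
proof -
  assume a: "inbox D" "inbox D'" "D \<le> D'" "D \<noteq> D'"
  have sub: "{(x, y). x < n \<and> y < n \<and> D x y} \<subseteq> {(x, y). x < n \<and> y < n \<and> D' x y}"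
    using a(3) by (auto simp: le_fun_def)
  have "\<exists>x y. D' x y \<and> \<not> D x y"
  proof (rule ccontr)
    assume "\<not> (\<exists>x y. D' x y \<and> \<not> D x y)"
    then have "D' \<le> D" by (auto simp: le_fun_def)
    then show False using a(3,4) antisym by blast
  qed
  then obtain x y where "D' x y" "\<not> D x y" by blast
  then have "(x, y) \<in> {(x, y). x < n \<and> y < n \<and> D' x y}" "(x, y) \<notin> {(x, y). x < n \<and> y < n \<and> D x y}"
    using a(2) unfolding inbox_def by auto
  then have "{(x, y). x < n \<and> y < n \<and> D x y} \<subset> {(x, y). x < n \<and> y < n \<and> D' x y}" using sub by blast
  then show ?thesis unfolding cnt_def by (intro psubset_card_mono box_fin)
qed

lemma iter_prog: "rnd n P R ((rnd n P R ^^ k) (\<lambda>_ _. False)) = (rnd n P R ^^ k) (\<lambda>_ _. False)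
    \<or> k \<le> cnt ((rnd n P R ^^ k) (\<lambda>_ _. False))"
proof (induction k)
  case 0 then show ?case by simp
next
  case (Suc k)
  define D where "D = (rnd n P R ^^ k) (\<lambda>_ _. False)"
  have ib: "inbox D" unfolding D_def by (rule inbox_iter)
  show ?case
  proof (cases "rnd n P R D = D")
    case True then show ?thesis unfolding D_def by simp
  next
    case False
    have "D \<le> rnd n P R D" unfolding rnd_def by (rule foldl_mono)
    then have "cnt D < cnt (rnd n P R D)"
      using cnt_less[OF ib inbox_rnd[OF ib]] False by auto
    moreover have "k \<le> cnt D" using Suc.IH False unfolding D_def by blast
    ultimately have "Suc k \<le> cnt (rnd n P R D)" by simp
    then show ?thesis unfolding D_def by simp
  qed
qed

lemma full_fix: "inbox D \<Longrightarrow> cnt D \<ge> n * n \<Longrightarrow> rnd n P R D = D"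
proof -
  assume a: "inbox D" "cnt D \<ge> n * n"
  have sub: "{(x, y). x < n \<and> y < n \<and> D x y} \<subseteq> {..<n} \<times> {..<n}" by auto
  have "card ({..<n} \<times> {..<n}) = n * n" by (simp add: card_cartesian_product)
  moreover have "card {(x, y). x < n \<and> y < n \<and> D x y} = n * n" using a(2) cnt_le[of D] unfolding cnt_def by simp
  ultimately have "{(x, y). x < n \<and> y < n \<and> D x y} = {..<n} \<times> {..<n}"
    using sub by (intro card_subset_eq) auto
  then have full: "\<And>x y. x < n \<Longrightarrow> y < n \<Longrightarrow> D x y" by blast
  have "inbox (rnd n P R D)" using inbox_rnd[OF a(1)] .
  moreover have "D \<le> rnd n P R D" unfolding rnd_def by (rule foldl_mono)
  ultimately have h: "inbox (rnd n P R D)" "D \<le> rnd n P R D" .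
  show ?thesis
  proof (intro ext)
    fix x y
    show "rnd n P R D x y = D x y"
    proof (cases "x < n \<and> y < n")
      case True then show ?thesis using full[of x y] h(2) by (auto simp: le_fun_def)
    next
      case False then show ?thesis using h(1) a(1) unfolding inbox_def by blast
    qed
  qed
qed

lemma Dfin_fix: "rnd n P R (Dfin n P R) = Dfin n P R"
proof -
  have ib: "inbox (Dfin n P R)" unfolding Dfin_def by (rule inbox_iter)
  show ?thesis using iter_prog[of "n * n"] full_fix[OF ib] cnt_le unfolding Dfin_def by auto
qed

theorem result_correct: "correct_output n P R (result n P R)"
proof (cases "\<exists>b<n. scan P (Dfin n P R) b n = 0")
  case True
  then obtain b where b: "b < n" "scan P (Dfin n P R) b n = 0" by blast
  have none: "\<nexists>N. stable_matching n P R N"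
  proof
    assume "\<exists>N. stable_matching n P R N"
    then obtain N where st: "stable_matching n P R N" by blast
    have "sound (Dfin n P R)" unfolding Dfin_def by (rule sound_iter)
    then have "\<not> Dfin n P R b (N ! b)" using st b unfolding sound_def by blast
    moreover have "Dfin n P R b (N ! b)" using scan_zero[OF b(1)] b(2) stable_facts(4)[OF st b(1)] by blast
    ultimately show False by simp
  qed
  show ?thesis unfolding result_def correct_output_def using True none by simp
next
  case False
  define D where "D = Dfin n P R"
  define top where "top b = scan P D b n - 1" for b
  have nz: "\<And>b. b < n \<Longrightarrow> scan P D b n \<noteq> 0" using False D_def by auto
  have tp: "\<And>b. b < n \<Longrightarrow> top b < n \<and> \<not> D b (top b) \<and> (\<forall>c<n. \<not> D b c \<longrightarrow> c \<noteq> top b \<longrightarrow> P b (top b) c)"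
  proof -
    fix b assume b: "b < n"
    show "top b < n \<and> \<not> D b (top b) \<and> (\<forall>c<n. \<not> D b c \<longrightarrow> c \<noteq> top b \<longrightarrow> P b (top b) c)"
      using scan_top[OF b nz[OF b]] unfolding top_def .
  qed
  have fx: "\<And>b. b < n \<Longrightarrow> stepb n P R D b = D" using fix_step[OF Dfin_fix] unfolding D_def .
  have keep: "\<And>b x y. b < n \<Longrightarrow> x < n \<Longrightarrow> y < n \<Longrightarrow> x \<noteq> b \<Longrightarrow> (y = top b \<or> P b y (top b)) \<Longrightarrow> \<not> D x y \<Longrightarrow> R y x b"
  proof -
    fix b x y assume a: "b < n" "x < n" "y < n" "x \<noteq> b" "y = top b \<or> P b y (top b)" "\<not> D x y"
    have "stepb n P R D b x y = D x y" using fx[OF a(1)] by simp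
    then have h: "\<not> (cnd P b (scan P D b n) y \<and> \<not> R y x b)" using a(2,3,4,6) unfolding stepb_def by simp
    have "cnd P b (scan P D b n) y" using a(5) unfolding cnd_def top_def by blast
    then show "R y x b" using h by blast
  qed
  define M where "M = map top [0..<n]"
  have lenM: "length M = n" unfolding M_def by simp
  have Mnth: "\<And>b. b < n \<Longrightarrow> M ! b = top b" unfolding M_def by simp
  have dist: "distinct M"
    unfolding distinct_conv_nth
  proof (intro allI impI)
    fix i j assume ij: "i < length M" "j < length M" "i \<noteq> j"
    show "M ! i \<noteq> M ! j"
    proof
      assume e: "M ! i = M ! j"
      have i: "i < n" and j: "j < n" using ij lenM by auto
      have tij: "top i = top j" using e Mnth[OF i] Mnth[OF j] by simp
      have d1: "\<not> D j (top j)" using tp[OF j] by blast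
      have d2: "\<not> D i (top i)" using tp[OF i] by blast
      have tn: "top i < n" using tp[OF i] by blast
      have r1: "R (top i) j i" using keep[OF i j tn] ij(3) d1 tij by auto
      have r2: "R (top i) i j" using keep[OF j i tn] ij(3) d2 tij by auto
      show False using asy[OF j i tn r1] r2 by simp
    qed
  qed
  have setM: "set M = {0..<n}"
  proof -
    have "set M \<subseteq> {0..<n}" unfolding M_def using tp by auto
    moreover have "card (set M) = n" using distinct_card[OF dist] lenM by simp
    ultimately show ?thesis by (intro card_subset_eq) auto
  qed
  have pm: "perfect_matching n M" unfolding perfect_matching_def using lenM dist setM by simp
  have nb: "\<And>b c. \<not> blocking_pair n P R M b c"
  proof
    fix b c assume bp: "blocking_pair n P R M b c"
    then have a: "b < n" "c < n" "M ! b \<noteq> c" "P b c (M ! b)" "\<not> R c (partner_of M c) b"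
      unfolding blocking_pair_def by auto
    have "c \<in> set M" using a(2) setM by simp
    then obtain x where x: "x < n" "M ! x = c" using lenM by (auto simp: in_set_conv_nth)
    have px: "partner_of M c = x" using partner_eq[OF dist] x lenM by auto
    have "x \<noteq> b" using x a(3) by auto
    have "\<not> D x c" using tp[OF x(1)] x Mnth[OF x(1)] by simp
    moreover have "c = top b \<or> P b c (top b)" using a(4) Mnth[OF a(1)] by simp
    ultimately have "R c x b" using keep[OF a(1) x(1) a(2) \<open>x \<noteq> b\<close>] by blast
    then show False using a(5) px by simp
  qed
  have "stable_matching n P R M" unfolding stable_matching_def using pm nb by blast
  moreover have "result n P R = 1 # M" unfolding result_def M_def top_def D_def using False by simp
  ultimately show ?thesis unfolding correct_output_def by blast
qed

end


fun lf :: "com \<Rightarrow> bool" where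
  "lf (Blk xs) = list_all is_basic xs"
| "lf (Seq a b) = (lf a \<and> lf b)"
| "lf (IfNZ r c) = lf c"
| "lf (DoWhile c z) = False"

fun sem :: "com \<Rightarrow> (nat \<Rightarrow> nat) \<Rightarrow> (nat \<Rightarrow> nat)" where
  "sem (Blk xs) m = execs xs m"
| "sem (Seq a b) m = sem b (sem a m)"
| "sem (IfNZ r c) m = (if m r = 0 then m else sem c m)"
| "sem (DoWhile c z) m = m"

fun tm :: "com \<Rightarrow> (nat \<Rightarrow> nat) \<Rightarrow> nat" where
  "tm (Blk xs) m = length xs"
| "tm (Seq a b) m = tm a m + tm b (sem a m)"
| "tm (IfNZ r c) m = (if m r = 0 then 1 else Suc (tm c m))"
| "tm (DoWhile c z) m = 0"

lemma IfZ': "m r = 0 \<Longrightarrow> big (IfNZ r c) m (Suc 0) m"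
  using big.IfZ by simp

lemma lf_big: "lf c \<Longrightarrow> big c m (tm c m) (sem c m)"
  by (induction c arbitrary: m) (auto intro: big.intros IfZ')

lemma tm_le: "tm c m \<le> clen c"
proof (induction c arbitrary: m)
  case (Seq c1 c2) then show ?case by (simp add: add_mono)
qed auto

lemma HT_lf: "lf c \<Longrightarrow> (\<And>m. P m \<Longrightarrow> Q (sem c m)) \<Longrightarrow> clen c \<le> k \<Longrightarrow> HT P c k Q"
  unfolding HT_def using lf_big tm_le order_trans by blast

definition FOR :: "nat \<Rightarrow> nat \<Rightarrow> nat \<Rightarrow> com \<Rightarrow> com" where
  "FOR one cnt z c = IfNZ cnt (DoWhile (Seq c (Blk [Sub cnt cnt one, Sub z one cnt])) z)"

lemma HT_for:
  assumes d: "cnt \<noteq> one" "z \<noteq> one" "cnt \<noteq> z"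
  and body: "\<And>i. i < N \<Longrightarrow> HT (\<lambda>m. Inv i m \<and> m cnt = N - i \<and> m one = 1) c k (\<lambda>m. Inv (Suc i) m \<and> m cnt = N - i \<and> m one = 1)"
  and fr: "\<And>i m v w. Inv i m \<Longrightarrow> Inv i (m(cnt := v, z := w))"
  and kk: "1 + N * (k + 3) \<le> K"
  shows "HT (\<lambda>m. Inv 0 m \<and> m cnt = N \<and> m one = 1) (FOR one cnt z c) K (\<lambda>m. Inv N m \<and> m one = 1)"
proof -
  define I where "I i m = (Inv i m \<and> m cnt = N - i \<and> m one = 1)" for i m
  have blk: "HT (\<lambda>m. Inv (Suc i) m \<and> m cnt = N - i \<and> m one = 1) (Blk [Sub cnt cnt one, Sub z one cnt]) 2
     (\<lambda>m. I (Suc i) m \<and> (m z = 0 \<longleftrightarrow> Suc i < N))" if "i < N" for i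
    by (rule HT_blk') (use d that fr in \<open>auto simp: I_def\<close>)
  have bd: "HT (I i) (Seq c (Blk [Sub cnt cnt one, Sub z one cnt])) (k + 2) (\<lambda>m. I (Suc i) m \<and> (m z = 0 \<longleftrightarrow> Suc i < N))"
    if "i < N" for i
    using HT_seq[OF body[OF that] blk[OF that]] unfolding I_def .
  show ?thesis
  proof (cases "N = 0")
    case True
    show ?thesis unfolding FOR_def
      by (rule HT_if[where k=0]) (auto simp: HT_def True intro: order_trans[OF _ kk])
  next
    case False
    have dw: "HT (I 0) (DoWhile (Seq c (Blk [Sub cnt cnt one, Sub z one cnt])) z) ((N - 0) * Suc (k + 2)) (I N)"
      by (rule HT_dowhile[OF bd]) (use False in auto)
    show ?thesis unfolding FOR_def
    proof (rule HT_if[OF HT_conseq[OF dw]])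
      show "\<And>m. (Inv 0 m \<and> m cnt = N \<and> m one = 1) \<and> m cnt \<noteq> 0 \<Longrightarrow> I 0 m" by (simp add: I_def)
      show "\<And>m. I N m \<Longrightarrow> Inv N m \<and> m one = 1" by (simp add: I_def)
      show "(N - 0) * Suc (k + 2) \<le> N * (k + 3)" by (simp add: algebra_simps)
      show "\<And>m. Inv 0 m \<and> m cnt = N \<and> m one = 1 \<Longrightarrow> m cnt = 0 \<Longrightarrow> Inv N m \<and> m one = 1" using False by simp
      show "Suc (N * (k + 3)) \<le> K" using kk by simp
    qed
  qed
qed

definition unch :: "nat set \<Rightarrow> (nat \<Rightarrow> nat) \<Rightarrow> (nat \<Rightarrow> nat) \<Rightarrow> bool" where
  "unch S m0 m \<longleftrightarrow> (\<forall>a. a \<notin> S \<longrightarrow> m a = m0 a)"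

lemma unch_refl[simp]: "unch S m m" by (simp add: unch_def)

lemma unch_upd[simp]: "r \<in> S \<Longrightarrow> unch S m0 (m(r := v)) = unch S m0 m"
  by (auto simp: unch_def)

lemma unch_trans: "unch S m0 m1 \<Longrightarrow> unch S' m1 m2 \<Longrightarrow> S' \<subseteq> S \<Longrightarrow> unch S m0 m2"
  by (auto simp: unch_def)

lemma unch_D: "unch S m0 m \<Longrightarrow> a \<notin> S \<Longrightarrow> m a = m0 a"
  by (simp add: unch_def)

lemma for_bound: "(k::nat) \<le> a * q ^ j \<Longrightarrow> N < q \<Longrightarrow> 1 + N * (k + 3) \<le> (a + 4) * q ^ Suc j"
proof -
  assume h: "k \<le> a * q ^ j" "N < q"
  have q0: "1 \<le> q" using h(2) by simp
  have q1: "1 \<le> q ^ j" using one_le_power[OF q0] .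
  have "1 + N * (k + 3) \<le> 1 + q * (a * q ^ j + 3)" using h by (intro add_left_mono mult_mono) auto
  also have "\<dots> = a * q ^ Suc j + 3 * q + 1" by (simp add: algebra_simps)
  finally have s1: "1 + N * (k + 3) \<le> a * q ^ Suc j + (3 * q + 1)" by simp
  have "q \<le> q ^ Suc j" using q1 by simp
  moreover have "1 \<le> q ^ Suc j" using one_le_power[OF q0] .
  ultimately have "3 * q + 1 \<le> 4 * q ^ Suc j" by linarith
  then show ?thesis using s1 by (simp add: algebra_simps)
qed



lemma idx2_lt: "x < n \<Longrightarrow> y < n \<Longrightarrow> x * n + y < n * (n::nat)"
proof -
  assume a: "x < n" "y < n"
  have "x * n + y < x * n + n" using a by simp
  also have "\<dots> = Suc x * n" by simp
  also have "\<dots> \<le> n * n" using a by (intro mult_right_mono) auto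
  finally show ?thesis .
qed

lemma idx2_inj: "x < n \<Longrightarrow> y < n \<Longrightarrow> x' < n \<Longrightarrow> y' < n \<Longrightarrow> (x * n + y = x' * n + (y'::nat)) = (x = x' \<and> y = y')"
proof
  assume a: "x < n" "y < n" "x' < n" "y' < n" and e: "x * n + y = x' * n + y'"
  have "(x * n + y) div n = x" "(x' * n + y') div n = x'" using a by auto
  moreover have "(x * n + y) mod n = y" "(x' * n + y') mod n = y'" using a by auto
  ultimately show "x = x' \<and> y = y'" using e by metis
qed auto

lemma idx3_lt: "b < n \<Longrightarrow> c < n \<Longrightarrow> d < n \<Longrightarrow> b * n * n + c * n + d < n * n * (n::nat)"
proof -
  assume a: "b < n" "c < n" "d < n"
  have "c * n + d < n * n" using idx2_lt a by simp
  then have "b * n * n + c * n + d < b * n * n + n * n" by simp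
  also have "\<dots> = Suc b * (n * n)" by simp
  also have "\<dots> \<le> n * (n * n)" using a by (intro mult_right_mono) auto
  finally show ?thesis by (simp add: mult.assoc)
qed

context inst begin

definition L :: nat where "L = 1 + 2 * (n * n * n)"
definition base :: nat where "base = L + 1 + 40"
definition pb :: nat where "pb = base + 2"
definition rb :: nat where "rb = pb + n * n * n"
definition db :: nat where "db = rb + n * n * n"
definition ob :: nat where "ob = db + n * n"

lemma addr_facts: "44 \<le> pb" "pb \<le> rb" "rb \<le> db" "db \<le> ob" "40 < db"
  by (auto simp: pb_def rb_def db_def ob_def base_def L_def)

definition INP :: "(nat \<Rightarrow> nat) \<Rightarrow> bool" where
  "INP m \<longleftrightarrow> (\<forall>b<n. \<forall>c<n. \<forall>d<n. m (pb + (b * n * n + c * n + d)) = bit (P b c d)) \<and>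
     (\<forall>c<n. \<forall>x<n. \<forall>y<n. m (rb + (c * n * n + x * n + y)) = bit (R c x y))"

definition DM :: "(nat \<Rightarrow> nat) \<Rightarrow> (nat \<Rightarrow> nat \<Rightarrow> bool) \<Rightarrow> bool" where
  "DM m D \<longleftrightarrow> (\<forall>x<n. \<forall>y<n. m (db + (x * n + y)) = bit (D x y))"

definition Bs :: "(nat \<Rightarrow> nat) \<Rightarrow> bool" where
  "Bs m \<longleftrightarrow> m 3 = 1 \<and> m 4 = n \<and> m 5 = n * n \<and> m 6 = pb \<and> m 7 = rb \<and> m 8 = db \<and> m 9 = ob \<and> INP m"

lemma INP_unch: "INP m0 \<Longrightarrow> unch S m0 m \<Longrightarrow> S \<subseteq> {..<40} \<union> {db..} \<Longrightarrow> INP m"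
proof -
  assume a: "INP m0" "unch S m0 m" "S \<subseteq> {..<40} \<union> {db..}"
  have p: "m (pb + (b * n * n + c * n + d)) = m0 (pb + (b * n * n + c * n + d))" if "b < n" "c < n" "d < n" for b c d
  proof (rule unch_D[OF a(2)])
    have "b * n * n + c * n + d < n * n * n" using idx3_lt that .
    then have "pb + (b * n * n + c * n + d) < db" "40 \<le> pb + (b * n * n + c * n + d)"
      using addr_facts unfolding rb_def db_def by auto
    then show "pb + (b * n * n + c * n + d) \<notin> S" using a(3) by auto
  qed
  have r: "m (rb + (c * n * n + x * n + y)) = m0 (rb + (c * n * n + x * n + y))" if "c < n" "x < n" "y < n" for c x y
  proof (rule unch_D[OF a(2)])
    have "c * n * n + x * n + y < n * n * n" using idx3_lt that .
    then have "rb + (c * n * n + x * n + y) < db" "40 \<le> rb + (c * n * n + x * n + y)"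
      using addr_facts unfolding db_def by auto
    then show "rb + (c * n * n + x * n + y) \<notin> S" using a(3) by auto
  qed
  show ?thesis using a(1) p r unfolding INP_def by simp
qed

lemma DM_unch: "DM m0 D \<Longrightarrow> unch S m0 m \<Longrightarrow> S \<subseteq> {..<40} \<Longrightarrow> DM m D"
proof -
  assume a: "DM m0 D" "unch S m0 m" "S \<subseteq> {..<40}"
  have "m (db + (x * n + y)) = m0 (db + (x * n + y))" for x y
    by (rule unch_D[OF a(2)]) (use a(3) addr_facts in auto)
  then show ?thesis using a(1) unfolding DM_def by simp
qed

lemma Bs_unch: "Bs m0 \<Longrightarrow> unch S m0 m \<Longrightarrow> S \<subseteq> {10..<40} \<union> {db..} \<Longrightarrow> Bs m"
proof -
  assume a: "Bs m0" "unch S m0 m" "S \<subseteq> {10..<40} \<union> {db..}"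
  have s: "S \<subseteq> {..<40} \<union> {db..}" using a(3) by auto
  have "\<And>r. r \<in> {3,4,5,6,7,8,9} \<Longrightarrow> m r = m0 r"
    by (rule unch_D[OF a(2)]) (use a(3) addr_facts in auto)
  then show ?thesis using a(1) INP_unch[OF _ a(2) s] unfolding Bs_def by simp
qed

lemma DM_set: "DM m D \<Longrightarrow> x < n \<Longrightarrow> y < n \<Longrightarrow> DM (m(db + (x * n + y) := 1)) (\<lambda>a b. D a b \<or> (a = x \<and> b = y))"
  unfolding DM_def
proof (intro allI impI)
  fix a b assume h: "\<forall>x<n. \<forall>y<n. m (db + (x * n + y)) = bit (D x y)" "x < n" "y < n" "a < n" "b < n"
  show "(m(db + (x * n + y) := 1)) (db + (a * n + b)) = bit (D a b \<or> a = x \<and> b = y)"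
    using h idx2_inj[of a n b x y] by (auto simp: bit_def)
qed

end


context inst begin

definition scan_body :: com where
  "scan_body = Seq (Blk [LoadI 22 21, Sub 23 3 22]) (IfNZ 23 (Seq (Blk [Sub 24 3 19])
      (Seq (IfNZ 19 (Blk [Add 25 20 19, Sub 25 25 3, LoadI 24 25])) (IfNZ 24 (Blk [Add 19 18 3])))))"

definition scan_step :: com where
  "scan_step = Seq scan_body (Blk [Add 18 18 3, Add 20 20 4, Add 21 21 3])"

definition scan_c :: com where
  "scan_c = Seq (Blk [LoadC 19 0, LoadC 17 0, Add 17 17 4, LoadC 18 0, LoadC 22 0, Add 20 15 22, Add 21 16 22])
     (FOR 3 17 12 scan_step)"

definition S_scan :: "nat set" where "S_scan = {12,17,18,19,20,21,22,23,24,25}"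

lemma scan_step_spec:
  assumes b: "b < n" and i: "i < n" and m0: "Bs m0" "DM m0 D"
  shows "HT (\<lambda>m. (unch S_scan m0 m \<and> m 18 = i \<and> m 20 = pb + (b * n * n + i * n) \<and> m 21 = db + (b * n + i)
               \<and> m 19 = scan P D b i) \<and> m 17 = n - i \<and> m 3 = 1)
     scan_step 13
     (\<lambda>m. (unch S_scan m0 m \<and> m 18 = Suc i \<and> m 20 = pb + (b * n * n + Suc i * n) \<and> m 21 = db + (b * n + Suc i)
               \<and> m 19 = scan P D b (Suc i)) \<and> m 17 = n - i \<and> m 3 = 1)"
proof (rule HT_lf)
  show "lf scan_step" by (simp add: scan_step_def scan_body_def)
  show "clen scan_step \<le> 13" by (simp add: scan_step_def scan_body_def)
  fix m assume h: "(unch S_scan m0 m \<and> m 18 = i \<and> m 20 = pb + (b * n * n + i * n) \<and> m 21 = db + (b * n + i)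
               \<and> m 19 = scan P D b i) \<and> m 17 = n - i \<and> m 3 = 1"
  define s where "s = scan P D b i"
  have s_le: "s \<le> i" unfolding s_def by (rule scan_le)
  have rd: "m (db + (b * n + i)) = bit (D b i)"
  proof -
    have "db + (b * n + i) \<notin> S_scan" using addr_facts by (auto simp: S_scan_def)
    then have "m (db + (b * n + i)) = m0 (db + (b * n + i))" using h unch_D by blast
    then show ?thesis using m0(2) b i unfolding DM_def by simp
  qed
  have rp: "m (pb + (b * n * n + i * n) + s - 1) = bit (P b i (s - 1))" if "0 < s"
  proof -
    have e: "pb + (b * n * n + i * n) + s - 1 = pb + (b * n * n + i * n + (s - 1))" using that by simp
    have sn: "s - 1 < n" using s_le i that by simp
    have "b * n * n + i * n + (s - 1) < n * n * n" using idx3_lt[OF b i sn] .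
    then have "pb + (b * n * n + i * n + (s - 1)) \<notin> S_scan" using addr_facts by (auto simp: S_scan_def)
    then have "m (pb + (b * n * n + i * n + (s - 1))) = m0 (pb + (b * n * n + i * n + (s - 1)))" using h unch_D by blast
    moreover have "INP m0" using m0(1) Bs_def by simp
    ultimately show ?thesis using e b i sn unfolding INP_def by simp
  qed
  have big: "40 \<le> pb + (b * n * n + i * n) + s - 1" using addr_facts by simp
  have ss: "scan P D b (Suc i) = scanf P D b s i" unfolding s_def by (rule scan_Suc)
  have st: "m 19 = s" using h s_def by simp
  have m4: "m 4 = n"
  proof -
    have "m 4 = m0 4" using h unch_D[of S_scan m0 m 4] by (simp add: S_scan_def)
    then show ?thesis using m0(1) by (simp add: Bs_def)
  qed
  show "(unch S_scan m0 (sem scan_step m) \<and> sem scan_step m 18 = Suc i \<and>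
        sem scan_step m 20 = pb + (b * n * n + Suc i * n) \<and> sem scan_step m 21 = db + (b * n + Suc i)
        \<and> sem scan_step m 19 = scan P D b (Suc i)) \<and> sem scan_step m 17 = n - i \<and> sem scan_step m 3 = 1"
  proof (cases "D b i")
    case True
    then show ?thesis using h rd ss st m4 by (simp add: scan_step_def scan_body_def S_scan_def scanf_def bit_def algebra_simps)
  next
    case nd: False
    show ?thesis
    proof (cases "s = 0")
      case True
      then show ?thesis using h rd ss st nd m4 by (simp add: scan_step_def scan_body_def S_scan_def scanf_def bit_def algebra_simps)
    next
      case False
      then show ?thesis using h rd ss st nd rp m4 big by (simp add: scan_step_def scan_body_def S_scan_def scanf_def bit_def algebra_simps)
    qed
  qed
qed

lemma scan_spec:
  assumes b: "b < n" and m0: "Bs m0" "DM m0 D" "m0 15 = pb + b * n * n" "m0 16 = db + b * n"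
  shows "HT (\<lambda>m. m = m0) scan_c (8 + 16 * n) (\<lambda>m. unch S_scan m0 m \<and> m 19 = scan P D b n)"
proof -
  define Inv where "Inv i m = (unch S_scan m0 m \<and> m 18 = i \<and> m 20 = pb + (b * n * n + i * n) \<and> m 21 = db + (b * n + i)
               \<and> m 19 = scan P D b i)" for i m
  have m03: "m0 3 = 1" "m0 4 = n" using m0(1) by (auto simp: Bs_def)
  have blk: "HT (\<lambda>m. m = m0) (Blk [LoadC 19 0, LoadC 17 0, Add 17 17 4, LoadC 18 0, LoadC 22 0, Add 20 15 22, Add 21 16 22]) 7
     (\<lambda>m. Inv 0 m \<and> m 17 = n \<and> m 3 = 1)"
    by (rule HT_blk') (auto simp: Inv_def S_scan_def m0 m03)
  have fr: "HT (\<lambda>m. Inv 0 m \<and> m 17 = n \<and> m 3 = 1) (FOR 3 17 12 scan_step) (1 + n * 16) (\<lambda>m. Inv n m \<and> m 3 = 1)"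
  proof (rule HT_for)
    show "\<And>i. i < n \<Longrightarrow> HT (\<lambda>m. Inv i m \<and> m 17 = n - i \<and> m 3 = 1) scan_step 13 (\<lambda>m. Inv (Suc i) m \<and> m 17 = n - i \<and> m 3 = 1)"
      unfolding Inv_def using scan_step_spec[OF b _ m0(1,2)] by simp
    show "\<And>i m v w. Inv i m \<Longrightarrow> Inv i (m(17 := v, 12 := w))" by (simp add: Inv_def S_scan_def)
  qed auto
  show ?thesis unfolding scan_c_def
    by (rule HT_seq'[OF blk HT_conseq[OF fr]]) (auto simp: Inv_def)
qed

end


lemma HT_point: "(\<And>m0. P m0 \<Longrightarrow> HT (\<lambda>m. m = m0) c k (Q' m0)) \<Longrightarrow> (\<And>m0 m. P m0 \<Longrightarrow> Q' m0 m \<Longrightarrow> Q m) \<Longrightarrow> HT P c k Q"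
  unfolding HT_def by blast

context inst begin

lemma DM_cong: "DM m D \<Longrightarrow> (\<And>x y. x < n \<Longrightarrow> y < n \<Longrightarrow> D x y = D' x y) \<Longrightarrow> DM m D'"
  unfolding DM_def by simp

definition S_in :: "nat set" where "S_in = {12, 22, 23, 28, 29, 30, 31} \<union> {db..}"
definition S_del :: "nat set" where "S_del = {12, 17, 18, 20, 22, 23, 24, 25, 26, 27, 28, 29, 30, 31} \<union> {db..}"

lemma S_del_sub: "S_del \<subseteq> {10..<40} \<union> {db..}" by (auto simp: S_del_def)
lemma S_in_sub: "S_in \<subseteq> {10..<40} \<union> {db..}" by (auto simp: S_in_def)
lemma S_in_del: "S_in \<subseteq> S_del" by (auto simp: S_in_def S_del_def)

definition delm :: com where
  "delm = Seq (Blk [Sub 22 29 14, Sub 23 14 29, Add 22 22 23])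
     (IfNZ 22 (Seq (Blk [LoadI 23 30, Sub 23 3 23]) (IfNZ 23 (Blk [StoreI 31 3]))))"

definition delm_step :: com where
  "delm_step = Seq delm (Blk [Add 29 29 3, Add 30 30 4, Add 31 31 4])"

definition inner :: com where
  "inner = Seq (Blk [LoadC 28 0, Add 28 28 4, LoadC 29 0, LoadC 22 0, Add 30 27 22, Add 31 8 18])
     (FOR 3 28 12 delm_step)"

lemma delm_step_spec:
  assumes b: "b < n" and c: "c < n" and j: "j < n" and m0: "Bs m0"
  shows "HT (\<lambda>m. (unch S_in m0 m \<and> DM m (\<lambda>x y. Dc x y \<or> (y = c \<and> x < j \<and> x \<noteq> b \<and> \<not> R c x b)) \<and> m 29 = j
        \<and> m 30 = rb + (c * n * n + j * n + b) \<and> m 31 = db + (j * n + c) \<and> m 14 = b) \<and> m 28 = n - j \<and> m 3 = 1)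
     delm_step 11
     (\<lambda>m. (unch S_in m0 m \<and> DM m (\<lambda>x y. Dc x y \<or> (y = c \<and> x < Suc j \<and> x \<noteq> b \<and> \<not> R c x b)) \<and> m 29 = Suc j
        \<and> m 30 = rb + (c * n * n + Suc j * n + b) \<and> m 31 = db + (Suc j * n + c) \<and> m 14 = b) \<and> m 28 = n - j \<and> m 3 = 1)"
proof (rule HT_lf)
  show "lf delm_step" by (simp add: delm_step_def delm_def)
  show "clen delm_step \<le> 11" by (simp add: delm_step_def delm_def)
  fix m assume h: "(unch S_in m0 m \<and> DM m (\<lambda>x y. Dc x y \<or> (y = c \<and> x < j \<and> x \<noteq> b \<and> \<not> R c x b)) \<and> m 29 = j
        \<and> m 30 = rb + (c * n * n + j * n + b) \<and> m 31 = db + (j * n + c) \<and> m 14 = b) \<and> m 28 = n - j \<and> m 3 = 1"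
  have bs: "Bs m" using Bs_unch[OF m0 _ S_in_sub] h by blast
  then have m4: "m 4 = n" and inp: "INP m" by (auto simp: Bs_def)
  have rr: "m (rb + (c * n * n + j * n + b)) = bit (R c j b)" using inp c j b unfolding INP_def by simp
  have a1: "40 \<le> rb + (c * n * n + j * n + b)" using addr_facts by simp
  have a2: "40 \<le> db + (j * n + c)" using addr_facts by simp
  have dbS: "db + (j * n + c) \<in> S_in" by (simp add: S_in_def)
  define D1 where "D1 = (\<lambda>x y. Dc x y \<or> (y = c \<and> x < j \<and> x \<noteq> b \<and> \<not> R c x b))"
  define D2 where "D2 = (\<lambda>x y. Dc x y \<or> (y = c \<and> x < Suc j \<and> x \<noteq> b \<and> \<not> R c x b))"
  have dm: "DM m D1" using h D1_def by simp
  show "(unch S_in m0 (sem delm_step m) \<and> DM (sem delm_step m) D2 \<and> sem delm_step m 29 = Suc j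
        \<and> sem delm_step m 30 = rb + (c * n * n + Suc j * n + b) \<and> sem delm_step m 31 = db + (Suc j * n + c) \<and> sem delm_step m 14 = b) \<and> sem delm_step m 28 = n - j \<and> sem delm_step m 3 = 1"
  proof (cases "j \<noteq> b \<and> \<not> R c j b")
    case True
    have jb: "j - b + (b - j) \<noteq> 0" using True by auto
    have u: "unch {22, 23, 29, 30, 31} (m(db + (j * n + c) := 1)) (sem delm_step m)"
      unfolding unch_def using h rr a1 a2 jb True m4 by (simp add: delm_step_def delm_def bit_def)
    have dm2: "DM (m(db + (j * n + c) := 1)) D2"
      by (rule DM_cong[OF DM_set[OF dm j c]]) (auto simp: D1_def D2_def True less_Suc_eq)
    have dm3: "DM (sem delm_step m) D2" using DM_unch[OF dm2 u] by simp
    have u2: "unch S_in m0 (sem delm_step m)"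
      unfolding unch_def using h rr a1 a2 jb True m4 unch_D[of S_in m0 m] by (simp add: delm_step_def delm_def bit_def S_in_def)
    show ?thesis using h dm3 u2 rr a1 a2 jb True m4 by (simp add: delm_step_def delm_def bit_def algebra_simps)
  next
    case False
    have u: "unch {22, 23, 29, 30, 31} m (sem delm_step m)"
      unfolding unch_def using h rr a1 a2 False m4 by (auto simp: delm_step_def delm_def bit_def)
    have "DM m D2" by (rule DM_cong[OF dm]) (use False in \<open>auto simp: D1_def D2_def less_Suc_eq\<close>)
    then have dm3: "DM (sem delm_step m) D2" using DM_unch[OF _ u] by simp
    have u2: "unch S_in m0 (sem delm_step m)" using unch_trans[OF _ u] h by (auto simp: S_in_def)
    show ?thesis using h dm3 u2 rr a1 a2 False m4 by (auto simp: delm_step_def delm_def bit_def algebra_simps)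
  qed
qed

lemma inner_spec:
  assumes b: "b < n" and c: "c < n" and m0: "Bs m0" "DM m0 Dc" "m0 14 = b" "m0 18 = c" "m0 27 = rb + (c * n * n + b)"
  shows "HT (\<lambda>m. m = m0) inner (7 + n * 14)
     (\<lambda>m. unch S_in m0 m \<and> DM m (\<lambda>x y. Dc x y \<or> (y = c \<and> x < n \<and> x \<noteq> b \<and> \<not> R c x b)))"
proof -
  define Inv where "Inv j m = (unch S_in m0 m \<and> DM m (\<lambda>x y. Dc x y \<or> (y = c \<and> x < j \<and> x \<noteq> b \<and> \<not> R c x b)) \<and> m 29 = j
        \<and> m 30 = rb + (c * n * n + j * n + b) \<and> m 31 = db + (j * n + c) \<and> m 14 = b)" for j m
  have m03: "m0 3 = 1" "m0 4 = n" "m0 8 = db" using m0(1) by (auto simp: Bs_def)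
  have blk: "HT (\<lambda>m. m = m0) (Blk [LoadC 28 0, Add 28 28 4, LoadC 29 0, LoadC 22 0, Add 30 27 22, Add 31 8 18]) 6
     (\<lambda>m. Inv 0 m \<and> m 28 = n \<and> m 3 = 1)"
  proof (rule HT_blk')
    fix m assume "m = m0"
    have d: "DM m0 (\<lambda>x y. Dc x y \<or> (y = c \<and> x < 0 \<and> x \<noteq> b \<and> \<not> R c x b))" using m0(2) by simp
    have "DM (m0(28 := n, 29 := 0, 22 := 0, 30 := rb + (c * n * n + b), 31 := db + c)) (\<lambda>x y. Dc x y \<or> (y = c \<and> x < 0 \<and> x \<noteq> b \<and> \<not> R c x b))"
      by (rule DM_unch[OF d, of "{22, 28, 29, 30, 31}"]) (auto simp: unch_def)
    then show "Inv 0 (execs [LoadC 28 0, Add 28 28 4, LoadC 29 0, LoadC 22 0, Add 30 27 22, Add 31 8 18] m) \<and>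
      execs [LoadC 28 0, Add 28 28 4, LoadC 29 0, LoadC 22 0, Add 30 27 22, Add 31 8 18] m 28 = n \<and>
      execs [LoadC 28 0, Add 28 28 4, LoadC 29 0, LoadC 22 0, Add 30 27 22, Add 31 8 18] m 3 = 1"
      using \<open>m = m0\<close> m0 m03 by (simp add: Inv_def S_in_def)
  qed auto
  have fr: "HT (\<lambda>m. Inv 0 m \<and> m 28 = n \<and> m 3 = 1) (FOR 3 28 12 delm_step) (1 + n * 14) (\<lambda>m. Inv n m \<and> m 3 = 1)"
  proof (rule HT_for)
    show "\<And>i. i < n \<Longrightarrow> HT (\<lambda>m. Inv i m \<and> m 28 = n - i \<and> m 3 = 1) delm_step 11 (\<lambda>m. Inv (Suc i) m \<and> m 28 = n - i \<and> m 3 = 1)"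
      unfolding Inv_def using delm_step_spec[OF b c _ m0(1)] by simp
    show "\<And>i m v w. Inv i m \<Longrightarrow> Inv i (m(28 := v, 12 := w))"
    proof -
      fix i m v w assume "Inv i m"
      moreover have "DM m D \<Longrightarrow> DM (m(28 := v, 12 := w)) D" for D by (rule DM_unch[of m D "{12, 28}"]) (auto simp: unch_def)
      ultimately show "Inv i (m(28 := v, 12 := w))" by (simp add: Inv_def S_in_def)
    qed
  qed auto
  show ?thesis unfolding inner_def
    by (rule HT_seq'[OF blk HT_conseq[OF fr]]) (auto simp: Inv_def)
qed

definition condblk :: com where
  "condblk = Seq (Blk [Sub 24 3 19]) (IfNZ 19 (Blk [Add 25 20 19, Sub 25 25 3, LoadI 24 25, Add 26 18 3,
      Sub 22 26 19, Sub 23 19 26, Add 22 22 23, Sub 22 3 22, Add 24 24 22]))"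

definition delc_step :: com where
  "delc_step = Seq (Seq condblk (IfNZ 24 inner)) (Blk [Add 18 18 3, Add 20 20 4, Add 27 27 5])"

definition Dpart :: "(nat \<Rightarrow> nat \<Rightarrow> bool) \<Rightarrow> nat \<Rightarrow> nat \<Rightarrow> nat \<Rightarrow> nat \<Rightarrow> nat \<Rightarrow> bool" where
  "Dpart D b t i = (\<lambda>x y. D x y \<or> (x < n \<and> y < i \<and> x \<noteq> b \<and> cnd P b t y \<and> \<not> R y x b))"

lemma delc_step_spec:
  assumes b: "b < n" and i: "i < n" and t: "t \<le> n" and m0: "Bs m0"
  shows "HT (\<lambda>m. (unch S_del m0 m \<and> DM m (Dpart D b t i) \<and> m 18 = i \<and> m 20 = pb + (b * n * n + i * n)
        \<and> m 27 = rb + (i * n * n + b) \<and> m 19 = t \<and> m 14 = b) \<and> m 17 = n - i \<and> m 3 = 1)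
     delc_step (22 + n * 14)
     (\<lambda>m. (unch S_del m0 m \<and> DM m (Dpart D b t (Suc i)) \<and> m 18 = Suc i \<and> m 20 = pb + (b * n * n + Suc i * n)
        \<and> m 27 = rb + (Suc i * n * n + b) \<and> m 19 = t \<and> m 14 = b) \<and> m 17 = n - i \<and> m 3 = 1)"
proof -
  define Q0 where "Q0 m = (unch S_del m0 m \<and> DM m (Dpart D b t i) \<and> m 18 = i \<and> m 20 = pb + (b * n * n + i * n)
        \<and> m 27 = rb + (i * n * n + b) \<and> m 19 = t \<and> m 14 = b \<and> m 17 = n - i \<and> m 3 = 1)" for m
  define Q2 where "Q2 m = (unch S_del m0 m \<and> DM m (Dpart D b t (Suc i)) \<and> m 18 = i \<and> m 20 = pb + (b * n * n + i * n)
        \<and> m 27 = rb + (i * n * n + b) \<and> m 19 = t \<and> m 14 = b \<and> m 17 = n - i \<and> m 3 = 1)" for m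
  have s1: "HT Q0 condblk 11 (\<lambda>m. Q0 m \<and> (m 24 \<noteq> 0 \<longleftrightarrow> cnd P b t i))"
  proof (rule HT_lf)
    show "lf condblk" by (simp add: condblk_def)
    show "clen condblk \<le> 11" by (simp add: condblk_def)
    fix m assume h: "Q0 m"
    have u: "unch {22, 23, 24, 25, 26} m (sem condblk m)" unfolding unch_def by (simp add: condblk_def)
    have q0: "Q0 (sem condblk m)"
    proof -
      have "DM (sem condblk m) (Dpart D b t i)" using h DM_unch[OF _ u] by (simp add: Q0_def)
      moreover have "unch S_del m0 (sem condblk m)" using h unch_trans[OF _ u] by (auto simp: Q0_def S_del_def)
      moreover have "\<And>r. r \<in> {3, 14, 17, 18, 19, 20, 27} \<Longrightarrow> sem condblk m r = m r"
        by (rule unch_D[OF u]) auto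
      ultimately show ?thesis using h by (simp add: Q0_def)
    qed
    have bs: "Bs m" using Bs_unch[OF m0 _ S_del_sub] h by (simp add: Q0_def)
    then have inp: "INP m" by (simp add: Bs_def)
    have w: "sem condblk m 24 \<noteq> 0 \<longleftrightarrow> cnd P b t i"
    proof (cases "t = 0")
      case True then show ?thesis using h by (simp add: condblk_def Q0_def cnd_def)
    next
      case False
      have tn: "t - 1 < n" using t False by simp
      have e: "pb + (b * n * n + i * n) + t - 1 = pb + (b * n * n + i * n + (t - 1))" using False by simp
      have rp: "m (pb + (b * n * n + i * n) + t - 1) = bit (P b i (t - 1))"
        using inp b i tn e unfolding INP_def by simp
      have big: "40 \<le> pb + (b * n * n + i * n) + t - 1" using addr_facts by simp
      show ?thesis using h False rp big by (auto simp: condblk_def Q0_def cnd_def bit_def)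
    qed
    show "Q0 (sem condblk m) \<and> (sem condblk m 24 \<noteq> 0 \<longleftrightarrow> cnd P b t i)" using q0 w by simp
  qed
  have s2: "HT (\<lambda>m. Q0 m \<and> (m 24 \<noteq> 0 \<longleftrightarrow> cnd P b t i)) (IfNZ 24 inner) (8 + n * 14) Q2"
  proof (rule HT_if)
    show "HT (\<lambda>m. (Q0 m \<and> (m 24 \<noteq> 0 \<longleftrightarrow> cnd P b t i)) \<and> m 24 \<noteq> 0) inner (7 + n * 14) Q2"
    proof (rule HT_point)
      fix m1 assume h: "(Q0 m1 \<and> (m1 24 \<noteq> 0 \<longleftrightarrow> cnd P b t i)) \<and> m1 24 \<noteq> 0"
      have bs: "Bs m1" using Bs_unch[OF m0 _ S_del_sub] h by (simp add: Q0_def)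
      show "HT (\<lambda>m. m = m1) inner (7 + n * 14)
         (\<lambda>m. unch S_in m1 m \<and> DM m (\<lambda>x y. Dpart D b t i x y \<or> (y = i \<and> x < n \<and> x \<noteq> b \<and> \<not> R i x b)))"
        by (rule inner_spec[OF b i bs]) (use h in \<open>auto simp: Q0_def\<close>)
    next
      fix m1 m assume h: "(Q0 m1 \<and> (m1 24 \<noteq> 0 \<longleftrightarrow> cnd P b t i)) \<and> m1 24 \<noteq> 0"
        and h2: "unch S_in m1 m \<and> DM m (\<lambda>x y. Dpart D b t i x y \<or> (y = i \<and> x < n \<and> x \<noteq> b \<and> \<not> R i x b))"
      have c: "cnd P b t i" using h by blast
      have dm: "DM m (Dpart D b t (Suc i))"
        by (rule DM_cong[OF conjunct2[OF h2]]) (use c in \<open>auto simp: Dpart_def less_Suc_eq\<close>)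
      have r: "\<And>r. r \<in> {3, 14, 17, 18, 19, 20, 27} \<Longrightarrow> m r = m1 r"
        by (rule unch_D[OF conjunct1[OF h2]]) (use addr_facts in \<open>auto simp: S_in_def\<close>)
      have u: "unch S_del m0 m" using h h2 unch_trans[OF _ _ S_in_del] by (auto simp: Q0_def)
      show "Q2 m" using h r dm u by (simp add: Q0_def Q2_def)
    qed
    show "\<And>m. Q0 m \<and> (m 24 \<noteq> 0 \<longleftrightarrow> cnd P b t i) \<Longrightarrow> m 24 = 0 \<Longrightarrow> Q2 m"
    proof -
      fix m assume h: "Q0 m \<and> (m 24 \<noteq> 0 \<longleftrightarrow> cnd P b t i)" "m 24 = 0"
      then have c: "\<not> cnd P b t i" by simp
      have "DM m (Dpart D b t (Suc i))"
        by (rule DM_cong[of m "Dpart D b t i"]) (use h c in \<open>auto simp: Q0_def Dpart_def less_Suc_eq\<close>)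
      then show "Q2 m" using h by (simp add: Q0_def Q2_def)
    qed
  qed simp
  have s3: "HT Q2 (Blk [Add 18 18 3, Add 20 20 4, Add 27 27 5]) 3
     (\<lambda>m. (unch S_del m0 m \<and> DM m (Dpart D b t (Suc i)) \<and> m 18 = Suc i \<and> m 20 = pb + (b * n * n + Suc i * n)
        \<and> m 27 = rb + (Suc i * n * n + b) \<and> m 19 = t \<and> m 14 = b) \<and> m 17 = n - i \<and> m 3 = 1)"
  proof (rule HT_blk')
    fix m assume h: "Q2 m"
    have bs: "Bs m" using Bs_unch[OF m0 _ S_del_sub] h by (simp add: Q2_def)
    then have "m 4 = n" "m 5 = n * n" by (auto simp: Bs_def)
    moreover have "DM (execs [Add 18 18 3, Add 20 20 4, Add 27 27 5] m) (Dpart D b t (Suc i))"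
      using h DM_unch[of m _ "{18, 20, 27}"] by (simp add: Q2_def unch_def)
    ultimately show "(unch S_del m0 (execs [Add 18 18 3, Add 20 20 4, Add 27 27 5] m) \<and> DM (execs [Add 18 18 3, Add 20 20 4, Add 27 27 5] m) (Dpart D b t (Suc i)) \<and>
        execs [Add 18 18 3, Add 20 20 4, Add 27 27 5] m 18 = Suc i \<and> execs [Add 18 18 3, Add 20 20 4, Add 27 27 5] m 20 = pb + (b * n * n + Suc i * n) \<and>
        execs [Add 18 18 3, Add 20 20 4, Add 27 27 5] m 27 = rb + (Suc i * n * n + b) \<and> execs [Add 18 18 3, Add 20 20 4, Add 27 27 5] m 19 = t \<and>
        execs [Add 18 18 3, Add 20 20 4, Add 27 27 5] m 14 = b) \<and>
       execs [Add 18 18 3, Add 20 20 4, Add 27 27 5] m 17 = n - i \<and> execs [Add 18 18 3, Add 20 20 4, Add 27 27 5] m 3 = 1"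
      using h by (simp add: Q2_def S_del_def algebra_simps)
  qed auto
  show ?thesis unfolding delc_step_def
    by (rule HT_seq'[OF HT_seq[OF HT_conseq[OF s1] s2] s3]) (auto simp: Q0_def)
qed

end


context inst begin

definition del_c :: com where
  "del_c = Seq (Blk [LoadC 17 0, Add 17 17 4, LoadC 18 0, Add 27 7 14, LoadC 22 0, Add 20 15 22]) (FOR 3 17 12 delc_step)"

lemma del_spec:
  assumes b: "b < n" and t: "t \<le> n" and m0: "Bs m0" "DM m0 D" "m0 14 = b" "m0 15 = pb + b * n * n" "m0 19 = t"
  shows "HT (\<lambda>m. m = m0) del_c (7 + n * (25 + n * 14)) (\<lambda>m. unch S_del m0 m \<and> DM m (Dpart D b t n))"
proof -
  define Inv where "Inv i m = (unch S_del m0 m \<and> DM m (Dpart D b t i) \<and> m 18 = i \<and> m 20 = pb + (b * n * n + i * n)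
        \<and> m 27 = rb + (i * n * n + b) \<and> m 19 = t \<and> m 14 = b)" for i m
  have m03: "m0 3 = 1" "m0 4 = n" "m0 7 = rb" using m0(1) by (auto simp: Bs_def)
  have blk: "HT (\<lambda>m. m = m0) (Blk [LoadC 17 0, Add 17 17 4, LoadC 18 0, Add 27 7 14, LoadC 22 0, Add 20 15 22]) 6
     (\<lambda>m. Inv 0 m \<and> m 17 = n \<and> m 3 = 1)"
  proof (rule HT_blk')
    fix m assume "m = m0"
    have d: "DM m0 (Dpart D b t 0)" by (rule DM_cong[OF m0(2)]) (simp add: Dpart_def)
    have "DM (m0(17 := n, 18 := 0, 27 := rb + b, 22 := 0, 20 := pb + b * n * n)) (Dpart D b t 0)"
      by (rule DM_unch[OF d, of "{17, 18, 20, 22, 27}"]) (auto simp: unch_def)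
    then show "Inv 0 (execs [LoadC 17 0, Add 17 17 4, LoadC 18 0, Add 27 7 14, LoadC 22 0, Add 20 15 22] m) \<and>
      execs [LoadC 17 0, Add 17 17 4, LoadC 18 0, Add 27 7 14, LoadC 22 0, Add 20 15 22] m 17 = n \<and>
      execs [LoadC 17 0, Add 17 17 4, LoadC 18 0, Add 27 7 14, LoadC 22 0, Add 20 15 22] m 3 = 1"
      using \<open>m = m0\<close> m0 m03 by (simp add: Inv_def S_del_def)
  qed auto
  have fr: "HT (\<lambda>m. Inv 0 m \<and> m 17 = n \<and> m 3 = 1) (FOR 3 17 12 delc_step) (1 + n * (25 + n * 14)) (\<lambda>m. Inv n m \<and> m 3 = 1)"
  proof (rule HT_for)
    show "\<And>i. i < n \<Longrightarrow> HT (\<lambda>m. Inv i m \<and> m 17 = n - i \<and> m 3 = 1) delc_step (22 + n * 14) (\<lambda>m. Inv (Suc i) m \<and> m 17 = n - i \<and> m 3 = 1)"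
      unfolding Inv_def using delc_step_spec[OF b _ t m0(1)] by simp
    show "\<And>i m v w. Inv i m \<Longrightarrow> Inv i (m(17 := v, 12 := w))"
    proof -
      fix i m v w assume "Inv i m"
      moreover have "DM m D' \<Longrightarrow> DM (m(17 := v, 12 := w)) D'" for D' by (rule DM_unch[of m D' "{12, 17}"]) (auto simp: unch_def)
      ultimately show "Inv i (m(17 := v, 12 := w))" by (simp add: Inv_def S_del_def)
    qed
  qed (auto simp: algebra_simps)
  show ?thesis unfolding del_c_def
    by (rule HT_seq'[OF blk HT_conseq[OF fr]]) (auto simp: Inv_def)
qed

definition stepb_c :: com where "stepb_c = Seq scan_c del_c"

definition S_step :: "nat set" where "S_step = {12} \<union> {17..<32} \<union> {db..}"

lemma stepb_spec:
  assumes b: "b < n" and m0: "Bs m0" "DM m0 D" "m0 14 = b" "m0 15 = pb + b * n * n" "m0 16 = db + b * n"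
  shows "HT (\<lambda>m. m = m0) stepb_c (15 + 16 * n + n * (25 + n * 14)) (\<lambda>m. unch S_step m0 m \<and> DM m (stepb n P R D b))"
proof (unfold stepb_c_def, rule HT_seq'[OF scan_spec[OF b m0(1,2,4,5)]])
  show "HT (\<lambda>m. unch S_scan m0 m \<and> m 19 = scan P D b n) del_c (7 + n * (25 + n * 14)) (\<lambda>m. unch S_step m0 m \<and> DM m (stepb n P R D b))"
  proof (rule HT_point)
    fix m1 assume h: "unch S_scan m0 m1 \<and> m1 19 = scan P D b n"
    have ss: "S_scan \<subseteq> {10..<40} \<union> {db..}" "S_scan \<subseteq> {..<40}" by (auto simp: S_scan_def)
    have bs: "Bs m1" using Bs_unch[OF m0(1) _ ss(1)] h by blast
    have dm: "DM m1 D" using DM_unch[OF m0(2) _ ss(2)] h by blast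
    have r: "\<And>r. r \<in> {14, 15} \<Longrightarrow> m1 r = m0 r" by (rule unch_D[of S_scan m0]) (use h in \<open>auto simp: S_scan_def\<close>)
    show "HT (\<lambda>m. m = m1) del_c (7 + n * (25 + n * 14)) (\<lambda>m. unch S_del m1 m \<and> DM m (Dpart D b (scan P D b n) n))"
      by (rule del_spec[OF b scan_le bs dm]) (use r m0 h in auto)
  next
    fix m1 m assume h: "unch S_scan m0 m1 \<and> m1 19 = scan P D b n" and h2: "unch S_del m1 m \<and> DM m (Dpart D b (scan P D b n) n)"
    have "unch S_step m0 m" using unch_trans[of S_step m0 m1 S_del m] unch_trans[of S_step m0 m0 S_scan m1] h h2
      by (auto simp: S_step_def S_scan_def S_del_def)
    moreover have "DM m (stepb n P R D b)" by (rule DM_cong[OF conjunct2[OF h2]]) (simp add: Dpart_def stepb_def)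
    ultimately show "unch S_step m0 m \<and> DM m (stepb n P R D b)" by simp
  qed
qed simp

lemma stepb_spec':
  assumes b: "b < n" and m0: "Bs m0" "DM m0 D" "m0 14 = b" "m0 15 = pb + b * n * n" "m0 16 = db + b * n"
  shows "HT (\<lambda>m. m = m0) stepb_c (70 * Suc n ^ 2) (\<lambda>m. unch S_step m0 m \<and> DM m (stepb n P R D b))"
  by (rule HT_conseq[OF stepb_spec[OF assms]]) (auto simp: power2_eq_square algebra_simps)

definition round_c :: com where
  "round_c = Seq (Blk [LoadC 13 0, Add 13 13 4, LoadC 14 0, LoadC 22 0, Add 15 6 22, Add 16 8 22])
     (FOR 3 13 12 (Seq stepb_c (Blk [Add 14 14 3, Add 15 15 5, Add 16 16 4])))"

definition S_round :: "nat set" where "S_round = {12..<32} \<union> {db..}"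

lemma round_spec:
  assumes m0: "Bs m0" "DM m0 D"
  shows "HT (\<lambda>m. m = m0) round_c (83 * Suc n ^ 3) (\<lambda>m. unch S_round m0 m \<and> DM m (rnd n P R D))"
proof -
  define Inv where "Inv i m = (unch S_round m0 m \<and> DM m (foldl (stepb n P R) D [0..<i]) \<and> m 14 = i \<and> m 15 = pb + i * n * n \<and> m 16 = db + i * n)" for i m
  have m03: "m0 3 = 1" "m0 4 = n" "m0 6 = pb" "m0 8 = db" using m0(1) by (auto simp: Bs_def)
  have blk: "HT (\<lambda>m. m = m0) (Blk [LoadC 13 0, Add 13 13 4, LoadC 14 0, LoadC 22 0, Add 15 6 22, Add 16 8 22]) 6
     (\<lambda>m. Inv 0 m \<and> m 13 = n \<and> m 3 = 1)"
  proof (rule HT_blk')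
    fix m assume "m = m0"
    have "DM (m0(13 := n, 14 := 0, 22 := 0, 15 := pb, 16 := db)) D"
      by (rule DM_unch[OF m0(2), of "{13, 14, 15, 16, 22}"]) (auto simp: unch_def)
    then show "Inv 0 (execs [LoadC 13 0, Add 13 13 4, LoadC 14 0, LoadC 22 0, Add 15 6 22, Add 16 8 22] m) \<and>
      execs [LoadC 13 0, Add 13 13 4, LoadC 14 0, LoadC 22 0, Add 15 6 22, Add 16 8 22] m 13 = n \<and>
      execs [LoadC 13 0, Add 13 13 4, LoadC 14 0, LoadC 22 0, Add 15 6 22, Add 16 8 22] m 3 = 1"
      using \<open>m = m0\<close> m03 by (simp add: Inv_def S_round_def)
  qed auto
  have body: "HT (\<lambda>m. Inv i m \<and> m 13 = n - i \<and> m 3 = 1) (Seq stepb_c (Blk [Add 14 14 3, Add 15 15 5, Add 16 16 4]))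
      (70 * Suc n ^ 2 + 3) (\<lambda>m. Inv (Suc i) m \<and> m 13 = n - i \<and> m 3 = 1)" if i: "i < n" for i
  proof (rule HT_point)
    fix m1 assume h: "Inv i m1 \<and> m1 13 = n - i \<and> m1 3 = 1"
    have bs: "Bs m1" by (rule Bs_unch[OF m0(1), of S_round]) (use h in \<open>auto simp: Inv_def S_round_def\<close>)
    show "HT (\<lambda>m. m = m1) (Seq stepb_c (Blk [Add 14 14 3, Add 15 15 5, Add 16 16 4])) (70 * Suc n ^ 2 + 3)
       (\<lambda>m. Inv (Suc i) m \<and> m 13 = n - i \<and> m 3 = 1)"
    proof (rule HT_seq[OF stepb_spec'[OF i bs]])
      show "DM m1 (foldl (stepb n P R) D [0..<i])" "m1 14 = i" "m1 15 = pb + i * n * n" "m1 16 = db + i * n"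
        using h by (auto simp: Inv_def)
      show "HT (\<lambda>m. unch S_step m1 m \<and> DM m (stepb n P R (foldl (stepb n P R) D [0..<i]) i))
          (Blk [Add 14 14 3, Add 15 15 5, Add 16 16 4]) 3 (\<lambda>m. Inv (Suc i) m \<and> m 13 = n - i \<and> m 3 = 1)"
      proof (rule HT_blk')
        fix m assume h2: "unch S_step m1 m \<and> DM m (stepb n P R (foldl (stepb n P R) D [0..<i]) i)"
        have r: "\<And>r. r \<in> {3, 4, 5, 13, 14, 15, 16} \<Longrightarrow> m r = m1 r"
          by (rule unch_D[of S_step m1]) (use h2 addr_facts in \<open>auto simp: S_step_def\<close>)
        have u: "unch S_round m0 m"
          by (rule unch_trans[of S_round m0 m1 S_step m]) (use h h2 in \<open>auto simp: S_step_def S_round_def Inv_def\<close>)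
        have "DM (execs [Add 14 14 3, Add 15 15 5, Add 16 16 4] m) (foldl (stepb n P R) D [0..<Suc i])"
          using h2 DM_unch[of m _ "{14, 15, 16}"] by (simp add: unch_def)
        then show "Inv (Suc i) (execs [Add 14 14 3, Add 15 15 5, Add 16 16 4] m) \<and>
           execs [Add 14 14 3, Add 15 15 5, Add 16 16 4] m 13 = n - i \<and> execs [Add 14 14 3, Add 15 15 5, Add 16 16 4] m 3 = 1"
          using u r h bs by (simp add: Inv_def S_round_def Bs_def algebra_simps)
      qed auto
    qed
  qed simp
  have fr: "HT (\<lambda>m. Inv 0 m \<and> m 13 = n \<and> m 3 = 1) (FOR 3 13 12 (Seq stepb_c (Blk [Add 14 14 3, Add 15 15 5, Add 16 16 4])))
      (77 * Suc n ^ 3) (\<lambda>m. Inv n m \<and> m 3 = 1)"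
  proof (rule HT_for[OF _ _ _ body])
    show "\<And>i m v w. Inv i m \<Longrightarrow> Inv i (m(13 := v, 12 := w))"
    proof -
      fix i m v w assume "Inv i m"
      moreover have "DM m D' \<Longrightarrow> DM (m(13 := v, 12 := w)) D'" for D' by (rule DM_unch[of m D' "{12, 13}"]) (auto simp: unch_def)
      ultimately show "Inv i (m(13 := v, 12 := w))" by (simp add: Inv_def S_round_def)
    qed
    show "1 + n * (70 * Suc n ^ 2 + 3 + 3) \<le> 77 * Suc n ^ 3"
      using for_bound[of "70 * Suc n ^ 2 + 3" 73 "Suc n" 2 n] by (simp add: power2_eq_square)
  qed auto
  show ?thesis unfolding round_c_def
    by (rule HT_seq'[OF blk HT_conseq[OF fr]]) (auto simp: Inv_def rnd_def)
qed

definition rounds_c :: com where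
  "rounds_c = Seq (Blk [LoadC 11 0, Add 11 11 4]) (FOR 3 11 12 round_c)"

definition S_rs :: "nat set" where "S_rs = {11..<32} \<union> {db..}"

lemma rounds_spec:
  assumes m0: "Bs m0" "DM m0 D"
  shows "HT (\<lambda>m. m = m0) rounds_c (89 * Suc n ^ 4) (\<lambda>m. unch S_rs m0 m \<and> DM m ((rnd n P R ^^ n) D))"
proof -
  define Inv where "Inv j m = (unch S_rs m0 m \<and> DM m ((rnd n P R ^^ j) D))" for j m
  have m03: "m0 3 = 1" "m0 4 = n" using m0(1) by (auto simp: Bs_def)
  have blk: "HT (\<lambda>m. m = m0) (Blk [LoadC 11 0, Add 11 11 4]) 2 (\<lambda>m. Inv 0 m \<and> m 11 = n \<and> m 3 = 1)"
  proof (rule HT_blk')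
    fix m assume "m = m0"
    have "DM (m0(11 := n)) D" by (rule DM_unch[OF m0(2), of "{11}"]) (auto simp: unch_def)
    then show "Inv 0 (execs [LoadC 11 0, Add 11 11 4] m) \<and> execs [LoadC 11 0, Add 11 11 4] m 11 = n \<and> execs [LoadC 11 0, Add 11 11 4] m 3 = 1"
      using \<open>m = m0\<close> m03 by (simp add: Inv_def S_rs_def)
  qed auto
  have body: "HT (\<lambda>m. Inv i m \<and> m 11 = n - i \<and> m 3 = 1) round_c (83 * Suc n ^ 3) (\<lambda>m. Inv (Suc i) m \<and> m 11 = n - i \<and> m 3 = 1)"
    if i: "i < n" for i
  proof (rule HT_point)
    fix m1 assume h: "Inv i m1 \<and> m1 11 = n - i \<and> m1 3 = 1"
    have bs: "Bs m1" by (rule Bs_unch[OF m0(1), of S_rs]) (use h in \<open>auto simp: Inv_def S_rs_def\<close>)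
    show "HT (\<lambda>m. m = m1) round_c (83 * Suc n ^ 3) (\<lambda>m. unch S_round m1 m \<and> DM m (rnd n P R ((rnd n P R ^^ i) D)))"
      by (rule round_spec[OF bs]) (use h in \<open>simp add: Inv_def\<close>)
  next
    fix m1 m assume h: "Inv i m1 \<and> m1 11 = n - i \<and> m1 3 = 1" and h2: "unch S_round m1 m \<and> DM m (rnd n P R ((rnd n P R ^^ i) D))"
    have r: "\<And>r. r \<in> {3, 11} \<Longrightarrow> m r = m1 r"
      by (rule unch_D[of S_round m1]) (use h2 addr_facts in \<open>auto simp: S_round_def\<close>)
    have u: "unch S_rs m0 m"
      by (rule unch_trans[of S_rs m0 m1 S_round m]) (use h h2 in \<open>auto simp: S_round_def S_rs_def Inv_def\<close>)
    show "Inv (Suc i) m \<and> m 11 = n - i \<and> m 3 = 1" using u r h h2 by (simp add: Inv_def)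
  qed
  have fr: "HT (\<lambda>m. Inv 0 m \<and> m 11 = n \<and> m 3 = 1) (FOR 3 11 12 round_c) (87 * Suc n ^ 4) (\<lambda>m. Inv n m \<and> m 3 = 1)"
  proof (rule HT_for[OF _ _ _ body])
    show "\<And>i m v w. Inv i m \<Longrightarrow> Inv i (m(11 := v, 12 := w))"
    proof -
      fix i m v w assume "Inv i m"
      moreover have "DM m D' \<Longrightarrow> DM (m(11 := v, 12 := w)) D'" for D' by (rule DM_unch[of m D' "{11, 12}"]) (auto simp: unch_def)
      ultimately show "Inv i (m(11 := v, 12 := w))" by (simp add: Inv_def S_rs_def)
    qed
    show "1 + n * (83 * Suc n ^ 3 + 3) \<le> 87 * Suc n ^ 4"
      using for_bound[of "83 * Suc n ^ 3" 83 "Suc n" 3 n] by simp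
  qed auto
  show ?thesis unfolding rounds_c_def
    by (rule HT_seq'[OF blk HT_conseq[OF fr]]) (auto simp: Inv_def)
qed

definition main_c :: com where
  "main_c = Seq (Blk [LoadC 10 0, Add 10 10 4]) (FOR 3 10 12 rounds_c)"

definition S_mn :: "nat set" where "S_mn = {10..<32} \<union> {db..}"

lemma main_spec:
  assumes m0: "Bs m0" "DM m0 (\<lambda>_ _. False)"
  shows "HT (\<lambda>m. m = m0) main_c (95 * Suc n ^ 5) (\<lambda>m. unch S_mn m0 m \<and> DM m (Dfin n P R))"
proof -
  define Inv where "Inv i m = (unch S_mn m0 m \<and> DM m ((rnd n P R ^^ (i * n)) (\<lambda>_ _. False)))" for i m
  have m03: "m0 3 = 1" "m0 4 = n" using m0(1) by (auto simp: Bs_def)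
  have blk: "HT (\<lambda>m. m = m0) (Blk [LoadC 10 0, Add 10 10 4]) 2 (\<lambda>m. Inv 0 m \<and> m 10 = n \<and> m 3 = 1)"
  proof (rule HT_blk')
    fix m assume "m = m0"
    have "DM (m0(10 := n)) (\<lambda>_ _. False)" by (rule DM_unch[OF m0(2), of "{10}"]) (auto simp: unch_def)
    then show "Inv 0 (execs [LoadC 10 0, Add 10 10 4] m) \<and> execs [LoadC 10 0, Add 10 10 4] m 10 = n \<and> execs [LoadC 10 0, Add 10 10 4] m 3 = 1"
      using \<open>m = m0\<close> m03 by (simp add: Inv_def S_mn_def)
  qed auto
  have body: "HT (\<lambda>m. Inv i m \<and> m 10 = n - i \<and> m 3 = 1) rounds_c (89 * Suc n ^ 4) (\<lambda>m. Inv (Suc i) m \<and> m 10 = n - i \<and> m 3 = 1)"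
    if i: "i < n" for i
  proof (rule HT_point)
    fix m1 assume h: "Inv i m1 \<and> m1 10 = n - i \<and> m1 3 = 1"
    have bs: "Bs m1" by (rule Bs_unch[OF m0(1), of S_mn]) (use h in \<open>auto simp: Inv_def S_mn_def\<close>)
    show "HT (\<lambda>m. m = m1) rounds_c (89 * Suc n ^ 4) (\<lambda>m. unch S_rs m1 m \<and> DM m ((rnd n P R ^^ n) ((rnd n P R ^^ (i * n)) (\<lambda>_ _. False))))"
      by (rule rounds_spec[OF bs]) (use h in \<open>simp add: Inv_def\<close>)
  next
    fix m1 m assume h: "Inv i m1 \<and> m1 10 = n - i \<and> m1 3 = 1"
      and h2: "unch S_rs m1 m \<and> DM m ((rnd n P R ^^ n) ((rnd n P R ^^ (i * n)) (\<lambda>_ _. False)))"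
    have r: "\<And>r. r \<in> {3, 10} \<Longrightarrow> m r = m1 r"
      by (rule unch_D[of S_rs m1]) (use h2 addr_facts in \<open>auto simp: S_rs_def\<close>)
    have u: "unch S_mn m0 m"
      by (rule unch_trans[of S_mn m0 m1 S_rs m]) (use h h2 in \<open>auto simp: S_mn_def S_rs_def Inv_def\<close>)
    have "(rnd n P R ^^ n) ((rnd n P R ^^ (i * n)) (\<lambda>_ _. False)) = (rnd n P R ^^ (Suc i * n)) (\<lambda>_ _. False)"
      by (simp add: funpow_add)
    then show "Inv (Suc i) m \<and> m 10 = n - i \<and> m 3 = 1" using u r h h2 by (simp add: Inv_def)
  qed
  have fr: "HT (\<lambda>m. Inv 0 m \<and> m 10 = n \<and> m 3 = 1) (FOR 3 10 12 rounds_c) (93 * Suc n ^ 5) (\<lambda>m. Inv n m \<and> m 3 = 1)"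
  proof (rule HT_for[OF _ _ _ body])
    show "\<And>i m v w. Inv i m \<Longrightarrow> Inv i (m(10 := v, 12 := w))"
    proof -
      fix i m v w assume "Inv i m"
      moreover have "DM m D' \<Longrightarrow> DM (m(10 := v, 12 := w)) D'" for D' by (rule DM_unch[of m D' "{10, 12}"]) (auto simp: unch_def)
      ultimately show "Inv i (m(10 := v, 12 := w))" by (simp add: Inv_def S_mn_def)
    qed
    show "1 + n * (89 * Suc n ^ 4 + 3) \<le> 93 * Suc n ^ 5"
      using for_bound[of "89 * Suc n ^ 4" 89 "Suc n" 4 n] by simp
  qed auto
  show ?thesis unfolding main_c_def
    by (rule HT_seq'[OF blk HT_conseq[OF fr]]) (auto simp: Inv_def Dfin_def)
qed

end


context inst begin

lemma DM_unch2: "DM m0 D \<Longrightarrow> unch S m0 m \<Longrightarrow> S \<subseteq> {..<40} \<union> {ob..} \<Longrightarrow> DM m D"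
proof -
  assume a: "DM m0 D" "unch S m0 m" "S \<subseteq> {..<40} \<union> {ob..}"
  have "m (db + (x * n + y)) = m0 (db + (x * n + y))" if "x < n" "y < n" for x y
  proof (rule unch_D[OF a(2)])
    have "x * n + y < n * n" using idx2_lt that .
    then show "db + (x * n + y) \<notin> S" using a(3) addr_facts unfolding ob_def by auto
  qed
  then show ?thesis using a(1) unfolding DM_def by simp
qed

definition fin_blk :: "instr list" where
  "fin_blk = [Sub 22 19 3, StoreI 33 22, Sub 23 3 19, Add 32 32 23, Add 14 14 3, Add 15 15 5, Add 16 16 4, Add 33 33 3]"

definition fin_c :: com where
  "fin_c = Seq (Blk [LoadC 32 0, LoadC 13 0, Add 13 13 4, LoadC 14 0, LoadC 22 0, Add 15 6 22, Add 16 8 22, LoadC 22 2, Add 33 9 22])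
     (FOR 3 13 12 (Seq scan_c (Blk fin_blk)))"

definition S_fin :: "nat set" where "S_fin = {12..<34} \<union> {ob..}"

lemma S_fin_sub: "S_fin \<subseteq> {10..<40} \<union> {db..}" "S_fin \<subseteq> {..<40} \<union> {ob..}"
  using addr_facts by (auto simp: S_fin_def)

lemma fin_spec:
  assumes m0: "Bs m0" "DM m0 D"
  shows "HT (\<lambda>m. m = m0) fin_c (45 * Suc n ^ 2) (\<lambda>m. unch S_fin m0 m \<and> (\<forall>b<n. m (ob + 2 + b) = scan P D b n - 1)
      \<and> (m 32 = 0 \<longleftrightarrow> (\<forall>b<n. scan P D b n \<noteq> 0)))"
proof -
  define Inv where "Inv i m = (unch S_fin m0 m \<and> m 14 = i \<and> m 15 = pb + i * n * n \<and> m 16 = db + i * n \<and> m 33 = ob + 2 + i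
     \<and> (m 32 = 0 \<longleftrightarrow> (\<forall>b<i. scan P D b n \<noteq> 0)) \<and> (\<forall>b<i. m (ob + 2 + b) = scan P D b n - 1))" for i m
  have m03: "m0 3 = 1" "m0 4 = n" "m0 6 = pb" "m0 8 = db" "m0 9 = ob" using m0(1) by (auto simp: Bs_def)
  have blk: "HT (\<lambda>m. m = m0) (Blk [LoadC 32 0, LoadC 13 0, Add 13 13 4, LoadC 14 0, LoadC 22 0, Add 15 6 22, Add 16 8 22, LoadC 22 2, Add 33 9 22]) 9
     (\<lambda>m. Inv 0 m \<and> m 13 = n \<and> m 3 = 1)"
    by (rule HT_blk') (auto simp: Inv_def S_fin_def m03)
  have body: "HT (\<lambda>m. Inv i m \<and> m 13 = n - i \<and> m 3 = 1) (Seq scan_c (Blk fin_blk)) (16 + 16 * n) (\<lambda>m. Inv (Suc i) m \<and> m 13 = n - i \<and> m 3 = 1)"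
    if i: "i < n" for i
  proof (rule HT_point)
    fix m1 assume h: "Inv i m1 \<and> m1 13 = n - i \<and> m1 3 = 1"
    have bs: "Bs m1" by (rule Bs_unch[OF m0(1) _ S_fin_sub(1)]) (use h in \<open>simp add: Inv_def\<close>)
    have dm: "DM m1 D" by (rule DM_unch2[OF m0(2) _ S_fin_sub(2)]) (use h in \<open>simp add: Inv_def\<close>)
    show "HT (\<lambda>m. m = m1) (Seq scan_c (Blk fin_blk)) (16 + 16 * n) (\<lambda>m. Inv (Suc i) m \<and> m 13 = n - i \<and> m 3 = 1)"
    proof (rule HT_seq'[OF scan_spec[OF i bs dm]])
      show "m1 15 = pb + i * n * n" "m1 16 = db + i * n" using h by (auto simp: Inv_def)
      show "HT (\<lambda>m. unch S_scan m1 m \<and> m 19 = scan P D i n) (Blk fin_blk) 8 (\<lambda>m. Inv (Suc i) m \<and> m 13 = n - i \<and> m 3 = 1)"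
      proof (rule HT_blk')
        fix m2 assume h2: "unch S_scan m1 m2 \<and> m2 19 = scan P D i n"
        define s where "s = scan P D i n"
        have r: "\<And>r. r \<in> {3, 4, 5, 13, 14, 15, 16, 32, 33} \<Longrightarrow> m2 r = m1 r"
          by (rule unch_D[of S_scan m1]) (use h2 in \<open>auto simp: S_scan_def\<close>)
        have mem: "\<And>a. 40 \<le> a \<Longrightarrow> m2 a = m1 a"
          by (rule unch_D[of S_scan m1]) (use h2 in \<open>auto simp: S_scan_def\<close>)
        have bs2: "m2 3 = 1" "m2 4 = n" "m2 5 = n * n" using r bs by (auto simp: Bs_def)
        have ob40: "40 \<le> ob" using addr_facts by simp
        define m3 where "m3 = execs fin_blk m2"
        have m3e: "m3 = m2(22 := s - 1, ob + 2 + i := s - 1, 23 := 1 - s, 32 := m2 32 + (1 - s), 14 := Suc i,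
            15 := pb + i * n * n + n * n, 16 := db + i * n + n, 33 := ob + 2 + i + 1)"
          unfolding m3_def fin_blk_def using h2 r h bs2 ob40 by (simp add: Inv_def s_def)
        have u: "unch S_fin m0 m3"
        proof -
          have "unch S_fin m1 m3"
            unfolding m3e using h2 unch_trans[of S_fin m1 m1 S_scan m2] by (auto simp: S_fin_def S_scan_def)
          then show ?thesis using h unch_trans[of S_fin m0 m1 S_fin m3] by (simp add: Inv_def)
        qed
        have w1: "\<forall>b<Suc i. m3 (ob + 2 + b) = scan P D b n - 1"
        proof (intro allI impI)
          fix b assume "b < Suc i"
          show "m3 (ob + 2 + b) = scan P D b n - 1"
          proof (cases "b = i")
            case True then show ?thesis unfolding m3e s_def using ob40 by simp
          next
            case False
            then have "b < i" using \<open>b < Suc i\<close> by simp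
            then show ?thesis unfolding m3e using ob40 False mem[of "ob + 2 + b"] h by (simp add: Inv_def)
          qed
        qed
        have w2: "m3 32 = 0 \<longleftrightarrow> (\<forall>b<Suc i. scan P D b n \<noteq> 0)"
          unfolding m3e using h r ob40 by (auto simp: Inv_def s_def less_Suc_eq)
        show "Inv (Suc i) (execs fin_blk m2) \<and> execs fin_blk m2 13 = n - i \<and> execs fin_blk m2 3 = 1"
          unfolding m3_def[symmetric] using u w1 w2 ob40 r h bs2 unfolding m3e by (simp add: Inv_def algebra_simps)
      qed (simp add: fin_blk_def)+
    qed simp
  qed simp
  have fr: "HT (\<lambda>m. Inv 0 m \<and> m 13 = n \<and> m 3 = 1) (FOR 3 13 12 (Seq scan_c (Blk fin_blk))) (36 * Suc n ^ 2) (\<lambda>m. Inv n m \<and> m 3 = 1)"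
  proof (rule HT_for[OF _ _ _ body])
    show "\<And>i m v w. Inv i m \<Longrightarrow> Inv i (m(13 := v, 12 := w))" using addr_facts by (simp add: Inv_def S_fin_def)
    show "1 + n * (16 + 16 * n + 3) \<le> 36 * Suc n ^ 2"
      by (simp add: power2_eq_square algebra_simps)
  qed auto
  show ?thesis unfolding fin_c_def
    by (rule HT_seq'[OF blk HT_conseq[OF fr]]) (auto simp: Inv_def)
qed

end


definition cbody :: "instr list" where
  "cbody = [LoadI 2 0, StoreI 1 2, LoadC 2 1, Sub 0 0 2, Sub 1 1 2, LoadC 2 3, Sub 2 2 1]"

definition copyout :: com where
  "copyout = Seq (Blk [Add 1 4 3, Add 0 9 1, LoadC 2 2, Sub 2 1 2])
     (Seq (IfNZ 2 (DoWhile (Blk cbody) 2)) (Blk [LoadI 2 0, Sub 0 0 1, LoadI 0 0, LoadC 1 1]))"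

lemma copy_spec:
  fixes n ob :: nat and w :: "nat \<Rightarrow> nat"
  assumes w0: "w 0 = n + 1" and w1: "w 1 = 1" and ob: "n + 3 < ob"
  shows "HT (\<lambda>m. m 4 = n \<and> m 3 = 1 \<and> m 9 = ob \<and> (\<forall>j\<le>n+1. m (ob + j) = w j)) copyout (9 + 8 * n)
     (\<lambda>m. m 0 = n + 1 \<and> (\<forall>j. 1 \<le> j \<and> j \<le> n + 1 \<longrightarrow> m j = w j))"
proof -
  define d0 where "d0 = (if n = 0 then 1 else 2::nat)"
  define Mid where "Mid m = (m 0 = ob + d0 \<and> m 1 = d0 \<and> (\<forall>j. d0 < j \<and> j \<le> n + 1 \<longrightarrow> m j = w j) \<and> (\<forall>j\<le>n+1. m (ob + j) = w j))" for m
  define Inv where "Inv k m = (m 0 = ob + (n + 1 - k) \<and> m 1 = n + 1 - k \<and> (\<forall>j. n + 1 - k < j \<and> j \<le> n + 1 \<longrightarrow> m j = w j)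
     \<and> (\<forall>j\<le>n+1. m (ob + j) = w j))" for k m
  have b1: "HT (\<lambda>m. m 4 = n \<and> m 3 = 1 \<and> m 9 = ob \<and> (\<forall>j\<le>n+1. m (ob + j) = w j)) (Blk [Add 1 4 3, Add 0 9 1, LoadC 2 2, Sub 2 1 2]) 4
     (\<lambda>m. Inv 0 m \<and> m 2 = n - 1)"
  proof (rule HT_blk')
    fix m assume h: "m 4 = n \<and> m 3 = 1 \<and> m 9 = ob \<and> (\<forall>j\<le>n+1. m (ob + j) = w j)"
    have "\<forall>j\<le>n+1. (m(1 := n + 1, 0 := ob + (n + 1), 2 := n - 1)) (ob + j) = w j" using h ob by auto
    then show "Inv 0 (execs [Add 1 4 3, Add 0 9 1, LoadC 2 2, Sub 2 1 2] m) \<and> execs [Add 1 4 3, Add 0 9 1, LoadC 2 2, Sub 2 1 2] m 2 = n - 1"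
      using h by (simp add: Inv_def)
  qed auto
  have bd: "HT (Inv k) (Blk cbody) 7 (\<lambda>m. Inv (Suc k) m \<and> (m 2 = 0 \<longleftrightarrow> Suc k < n - 1))" if k: "k < n - 1" for k
  proof (rule HT_blk')
    fix m assume h: "Inv k m"
    define d where "d = n + 1 - k"
    have d3: "3 \<le> d" "d \<le> n + 1" using k by (auto simp: d_def)
    have hs: "m 0 = ob + d" "m 1 = d" using h by (auto simp: Inv_def d_def)
    have wd: "m (ob + d) = w d" using h d3 by (auto simp: Inv_def)
    have e: "execs cbody m = m(2 := w d, d := w d, 2 := 1, 0 := ob + d - 1, 1 := d - 1, 2 := 3, 2 := 3 - (d - 1))"
      using hs wd d3 by (simp add: cbody_def)
    have "Inv (Suc k) (m(2 := w d, d := w d, 2 := 1, 0 := ob + d - 1, 1 := d - 1, 2 := 3, 2 := 3 - (d - 1)))"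
    proof -
      have a: "n + 1 - Suc k = d - 1" using d_def by simp
      have "\<forall>j. d - 1 < j \<and> j \<le> n + 1 \<longrightarrow> (m(2 := w d, d := w d, 2 := 1, 0 := ob + d - 1, 1 := d - 1, 2 := 3, 2 := 3 - (d - 1))) j = w j"
      proof (intro allI impI)
        fix j assume j: "d - 1 < j \<and> j \<le> n + 1"
        show "(m(2 := w d, d := w d, 2 := 1, 0 := ob + d - 1, 1 := d - 1, 2 := 3, 2 := 3 - (d - 1))) j = w j"
        proof (cases "j = d")
          case True then show ?thesis using d3 by simp
        next
          case False then have "d < j" using j d3 by linarith
          then show ?thesis using h j d3 by (auto simp: Inv_def d_def)
        qed
      qed
      moreover have "\<forall>j\<le>n+1. (m(2 := w d, d := w d, 2 := 1, 0 := ob + d - 1, 1 := d - 1, 2 := 3, 2 := 3 - (d - 1))) (ob + j) = w j"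
        using h ob d3 by (auto simp: Inv_def)
      ultimately show ?thesis unfolding Inv_def a using d3 by simp
    qed
    moreover have "(3 - (d - 1) = 0) = (Suc k < n - 1)" using k d_def by auto
    ultimately show "Inv (Suc k) (execs cbody m) \<and> (execs cbody m 2 = 0 \<longleftrightarrow> Suc k < n - 1)" unfolding e by simp
  qed (auto simp: cbody_def)
  have b2: "HT (\<lambda>m. Inv 0 m \<and> m 2 = n - 1) (IfNZ 2 (DoWhile (Blk cbody) 2)) (1 + 8 * n) Mid"
  proof (rule HT_if)
    show "HT (\<lambda>m. (Inv 0 m \<and> m 2 = n - 1) \<and> m 2 \<noteq> 0) (DoWhile (Blk cbody) 2) (8 * n) Mid"
    proof (cases "n - 1 = 0")
      case True then show ?thesis by (auto simp: HT_def)
    next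
      case False
      have "HT (Inv 0) (DoWhile (Blk cbody) 2) ((n - 1 - 0) * Suc 7) (Inv (n - 1))"
        by (rule HT_dowhile[OF bd]) (use False in auto)
      then show ?thesis
      proof (rule HT_conseq)
        show "\<And>m. Inv (n - 1) m \<Longrightarrow> Mid m" using False by (auto simp: Inv_def Mid_def d0_def)
      qed auto
    qed
    show "\<And>m. Inv 0 m \<and> m 2 = n - 1 \<Longrightarrow> m 2 = 0 \<Longrightarrow> Mid m"
    proof -
      fix m assume "Inv 0 m \<and> m 2 = n - 1" "m 2 = 0"
      then have "n \<le> 1" "Inv 0 m" by auto
      then show "Mid m" by (auto simp: Inv_def Mid_def d0_def)
    qed
  qed simp
  have b3: "HT Mid (Blk [LoadI 2 0, Sub 0 0 1, LoadI 0 0, LoadC 1 1]) 4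
     (\<lambda>m. m 0 = n + 1 \<and> (\<forall>j. 1 \<le> j \<and> j \<le> n + 1 \<longrightarrow> m j = w j))"
  proof (rule HT_blk')
    fix m assume h: "Mid m"
    have h0: "m 0 = ob + d0" "m 1 = d0" "m (ob + d0) = w d0" "m (ob + 0) = w 0"
      using h by (auto simp: Mid_def d0_def)
    have e: "execs [LoadI 2 0, Sub 0 0 1, LoadI 0 0, LoadC 1 1] m = m(2 := w d0, 0 := n + 1, 1 := 1)"
      using h0 w0 ob by (simp add: d0_def)
    show "execs [LoadI 2 0, Sub 0 0 1, LoadI 0 0, LoadC 1 1] m 0 = n + 1 \<and> (\<forall>j. 1 \<le> j \<and> j \<le> n + 1 \<longrightarrow> execs [LoadI 2 0, Sub 0 0 1, LoadI 0 0, LoadC 1 1] m j = w j)"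
      unfolding e using h w1 by (auto simp: Mid_def d0_def)
  qed auto
  show ?thesis unfolding copyout_def
    by (rule HT_seq'[OF b1 HT_seq[OF b2 b3]]) simp
qed



context inst begin

definition out_blk :: "instr list" where
  "out_blk = [Add 22 4 3, StoreI 9 22, LoadC 22 1, Add 23 9 3, StoreI 23 22, Sub 37 3 32]"

definition final_c :: com where
  "final_c = Seq fin_c (Seq (Blk out_blk) (Seq (IfNZ 32 (Blk [LoadC 1 0, LoadC 0 1])) (IfNZ 37 copyout)))"

definition res :: "(nat \<Rightarrow> nat \<Rightarrow> bool) \<Rightarrow> nat list" where
  "res D = (if \<exists>b<n. scan P D b n = 0 then [0] else 1 # map (\<lambda>b. scan P D b n - 1) [0..<n])"

lemma final_spec:
  assumes m0: "Bs m0" "DM m0 D"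
  shows "HT (\<lambda>m. m = m0) final_c (64 * Suc n ^ 2) (\<lambda>m. map (\<lambda>i. m (Suc i)) [0..<m 0] = res D)"
proof -
  define w where "w j = (if j = 0 then n + 1 else if j = 1 then 1 else scan P D (j - 2) n - 1)" for j
  have ob3: "n + 3 < ob"
  proof -
    have a: "n \<le> n * n" by (cases n) auto
    show ?thesis unfolding ob_def db_def rb_def pb_def base_def L_def using a by linarith
  qed
  define Q1 where "Q1 m = (unch S_fin m0 m \<and> (\<forall>b<n. m (ob + 2 + b) = scan P D b n - 1)
      \<and> (m 32 = 0 \<longleftrightarrow> (\<forall>b<n. scan P D b n \<noteq> 0)))" for m
  define Q2 where "Q2 m = (m 4 = n \<and> m 3 = 1 \<and> m 9 = ob \<and> (\<forall>j\<le>n+1. m (ob + j) = w j) \<and> m 37 = 1 - m 32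
      \<and> (m 32 = 0 \<longleftrightarrow> (\<forall>b<n. scan P D b n \<noteq> 0)))" for m
  define Q3 where "Q3 m = ((m 37 = 0 \<and> m 0 = 1 \<and> m 1 = 0 \<and> (\<exists>b<n. scan P D b n = 0)) \<or>
      (m 37 \<noteq> 0 \<and> m 4 = n \<and> m 3 = 1 \<and> m 9 = ob \<and> (\<forall>j\<le>n+1. m (ob + j) = w j) \<and> (\<forall>b<n. scan P D b n \<noteq> 0)))" for m
  have s2: "HT Q1 (Blk out_blk) 6 Q2"
  proof (rule HT_blk')
    fix m assume h: "Q1 m"
    have bs: "Bs m" by (rule Bs_unch[OF m0(1) _ S_fin_sub(1)]) (use h in \<open>simp add: Q1_def\<close>)
    then have r: "m 3 = 1" "m 4 = n" "m 9 = ob" by (auto simp: Bs_def)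
    have ob40: "40 \<le> ob" using addr_facts by simp
    have e: "execs out_blk m = m(22 := 1, ob := n + 1, 23 := ob + 1, ob + 1 := 1, 37 := 1 - m 32)"
      using r ob40 by (simp add: out_blk_def fun_upd_twist)
    have buf: "\<forall>j\<le>n+1. (m(22 := 1, ob := n + 1, 23 := ob + 1, ob + 1 := 1, 37 := 1 - m 32)) (ob + j) = w j"
    proof (intro allI impI)
      fix j assume j: "j \<le> n + 1"
      show "(m(22 := 1, ob := n + 1, 23 := ob + 1, ob + 1 := 1, 37 := 1 - m 32)) (ob + j) = w j"
      proof (cases "j \<le> 1")
        case True then show ?thesis using ob40 by (auto simp: w_def le_Suc_eq)
      next
        case False
        then have "j - 2 < n" "ob + j = ob + 2 + (j - 2)" using j by auto
        then show ?thesis using h False ob40 by (auto simp: Q1_def w_def)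
      qed
    qed
    show "Q2 (execs out_blk m)" unfolding e Q2_def using r buf h ob40 by (simp add: Q1_def)
  qed (simp add: out_blk_def)+
  have s3: "HT Q2 (IfNZ 32 (Blk [LoadC 1 0, LoadC 0 1])) 3 Q3"
  proof (rule HT_if)
    show "HT (\<lambda>m. Q2 m \<and> m 32 \<noteq> 0) (Blk [LoadC 1 0, LoadC 0 1]) 2 Q3"
      by (rule HT_blk') (auto simp: Q2_def Q3_def)
    show "\<And>m. Q2 m \<Longrightarrow> m 32 = 0 \<Longrightarrow> Q3 m" by (auto simp: Q2_def Q3_def)
  qed simp
  have s4: "HT Q3 (IfNZ 37 copyout) (10 + 8 * n) (\<lambda>m. map (\<lambda>i. m (Suc i)) [0..<m 0] = res D)"
  proof (rule HT_if)
    have cs: "HT (\<lambda>m. m 4 = n \<and> m 3 = 1 \<and> m 9 = ob \<and> (\<forall>j\<le>n+1. m (ob + j) = w j)) copyout (9 + 8 * n)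
     (\<lambda>m. m 0 = n + 1 \<and> (\<forall>j. 1 \<le> j \<and> j \<le> n + 1 \<longrightarrow> m j = w j))"
      by (rule copy_spec) (auto simp: w_def ob3)
    show "HT (\<lambda>m. Q3 m \<and> m 37 \<noteq> 0) copyout (9 + 8 * n) (\<lambda>m. map (\<lambda>i. m (Suc i)) [0..<m 0] = res D)"
    proof (cases "\<forall>b<n. scan P D b n \<noteq> 0")
      case False then show ?thesis by (auto simp: HT_def Q3_def)
    next
      case True
      show ?thesis
      proof (rule HT_conseq[OF cs])
        show "\<And>m. Q3 m \<and> m 37 \<noteq> 0 \<Longrightarrow> m 4 = n \<and> m 3 = 1 \<and> m 9 = ob \<and> (\<forall>j\<le>n+1. m (ob + j) = w j)"
          by (auto simp: Q3_def)
        fix m assume h: "m 0 = n + 1 \<and> (\<forall>j. 1 \<le> j \<and> j \<le> n + 1 \<longrightarrow> m j = w j)"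
        have "map (\<lambda>i. m (Suc i)) [0..<Suc n] = map (\<lambda>i. w (Suc i)) [0..<Suc n]"
          using h by (intro map_cong) auto
        also have "\<dots> = 1 # map (\<lambda>b. scan P D b n - 1) [0..<n]"
          by (simp add: w_def map_upt_Suc del: upt_Suc)
        finally show "map (\<lambda>i. m (Suc i)) [0..<m 0] = res D" using h True by (simp add: res_def)
      qed simp
    qed
    show "\<And>m. Q3 m \<Longrightarrow> m 37 = 0 \<Longrightarrow> map (\<lambda>i. m (Suc i)) [0..<m 0] = res D"
      by (auto simp: Q3_def res_def)
  qed simp
  have s1: "HT (\<lambda>m. m = m0) fin_c (45 * Suc n ^ 2) Q1" unfolding Q1_def by (rule fin_spec[OF m0])
  show ?thesis unfolding final_c_def
    by (rule HT_seq'[OF s1 HT_seq[OF s2 HT_seq[OF s3 s4]]]) (simp add: power2_eq_square algebra_simps)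
qed

end


definition rbody :: "instr list" where
  "rbody = [LoadI 2 0, StoreI 1 2, LoadC 2 1, Sub 0 0 2, Sub 1 1 2, LoadC 2 3, Sub 2 2 0]"

definition reloc_blk :: "instr list" where
  "reloc_blk = [LoadC 2 42, Add 2 2 0, StoreI 2 1, LoadC 1 41, Add 1 1 0, StoreI 1 0, Add 1 1 0, LoadC 2 2, Sub 2 0 2]"

definition reloc_c :: com where
  "reloc_c = Seq (Blk reloc_blk) (IfNZ 2 (DoWhile (Blk rbody) 2))"

lemma reloc_spec:
  fixes mi :: "nat \<Rightarrow> nat" and L :: nat
  assumes L1: "1 \<le> L" and mi0: "mi 0 = L" and miz: "\<And>a. L < a \<Longrightarrow> mi a = 0"
  shows "HT (\<lambda>m. m = mi) reloc_c (10 + 8 * L) (\<lambda>m. m 1 - m 0 = L + 41 \<and> (\<forall>a. 3 \<le> a \<and> a \<le> L \<longrightarrow> m (L + 41 + a) = mi a)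
     \<and> m (L + 41 + 1) = mi 1 \<and> m (L + 41) = L \<and> m (L + 41 + 2) = 0 \<and> (\<forall>a. L + 41 + L < a \<longrightarrow> m a = 0))"
proof -
  define B where "B = L + 41"
  define Inv where "Inv k m = (m 0 = L - k \<and> m 1 = B + (L - k) \<and> (\<forall>a. 3 \<le> a \<and> a \<le> L - k \<longrightarrow> m a = mi a)
     \<and> (\<forall>a. L - k < a \<and> a \<le> L \<longrightarrow> m (B + a) = mi a) \<and> m (B + 1) = mi 1 \<and> m B = L
     \<and> (\<forall>a. B + 2 \<le> a \<and> (a \<le> B + (L - k) \<or> B + L < a) \<longrightarrow> m a = 0))" for k m
  define Fin where "Fin m = (m 1 - m 0 = B \<and> (\<forall>a. 3 \<le> a \<and> a \<le> L \<longrightarrow> m (B + a) = mi a)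
     \<and> m (B + 1) = mi 1 \<and> m B = L \<and> m (B + 2) = 0 \<and> (\<forall>a. B + L < a \<longrightarrow> m a = 0))" for m
  have b1: "HT (\<lambda>m. m = mi) (Blk reloc_blk) 9 (\<lambda>m. Inv 0 m \<and> m 2 = L - 2)"
  proof (rule HT_blk')
    fix m assume "m = mi"
    have e: "execs reloc_blk m = mi(2 := L - 2, L + 42 := mi 1, 1 := B + L, L + 41 := L)"
      using \<open>m = mi\<close> mi0 by (auto simp: reloc_blk_def B_def fun_upd_def)
    show "Inv 0 (execs reloc_blk m) \<and> execs reloc_blk m 2 = L - 2"
      unfolding e Inv_def using mi0 miz L1 by (auto simp: B_def)
  qed (auto simp: reloc_blk_def)
  have bd: "HT (Inv k) (Blk rbody) 7 (\<lambda>m. Inv (Suc k) m \<and> (m 2 = 0 \<longleftrightarrow> Suc k < L - 2))" if k: "k < L - 2" for k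
  proof (rule HT_blk')
    fix m assume h: "Inv k m"
    define s where "s = L - k"
    have s3: "3 \<le> s" "s \<le> L" using k by (auto simp: s_def)
    have hs: "m 0 = s" "m 1 = B + s" using h by (auto simp: Inv_def s_def)
    have ms: "m s = mi s" using h s3 by (auto simp: Inv_def s_def)
    have e: "execs rbody m = m(2 := mi s, B + s := mi s, 2 := 1, 0 := s - 1, 1 := B + s - 1, 2 := 3, 2 := 3 - (s - 1))"
      using hs ms s3 by (simp add: rbody_def)
    have a: "L - Suc k = s - 1" using s_def by simp
    have "Inv (Suc k) (m(2 := mi s, B + s := mi s, 2 := 1, 0 := s - 1, 1 := B + s - 1, 2 := 3, 2 := 3 - (s - 1)))"
      unfolding Inv_def a
    proof (intro conjI allI impI)
      show "(m(2 := mi s, B + s := mi s, 2 := 1, 0 := s - 1, 1 := B + s - 1, 2 := 3, 2 := 3 - (s - 1))) 0 = s - 1" by simp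
      show "(m(2 := mi s, B + s := mi s, 2 := 1, 0 := s - 1, 1 := B + s - 1, 2 := 3, 2 := 3 - (s - 1))) 1 = B + (s - 1)" using s3 by simp
      fix a assume "3 \<le> a \<and> a \<le> s - 1"
      then show "(m(2 := mi s, B + s := mi s, 2 := 1, 0 := s - 1, 1 := B + s - 1, 2 := 3, 2 := 3 - (s - 1))) a = mi a"
        using h s3 by (auto simp: Inv_def s_def B_def)
    next
      fix a assume a: "s - 1 < a \<and> a \<le> L"
      show "(m(2 := mi s, B + s := mi s, 2 := 1, 0 := s - 1, 1 := B + s - 1, 2 := 3, 2 := 3 - (s - 1))) (B + a) = mi a"
      proof (cases "a = s")
        case True then show ?thesis by (simp add: B_def)
      next
        case False then have "s < a" using a s3 by linarith
        then show ?thesis using h a s3 by (auto simp: Inv_def s_def B_def)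
      qed
    next
      show "(m(2 := mi s, B + s := mi s, 2 := 1, 0 := s - 1, 1 := B + s - 1, 2 := 3, 2 := 3 - (s - 1))) (B + 1) = mi 1"
        using h s3 by (auto simp: Inv_def B_def)
      show "(m(2 := mi s, B + s := mi s, 2 := 1, 0 := s - 1, 1 := B + s - 1, 2 := 3, 2 := 3 - (s - 1))) B = L"
        using h s3 by (auto simp: Inv_def B_def)
    next
      fix a assume a: "B + 2 \<le> a \<and> (a \<le> B + (s - 1) \<or> B + L < a)"
      show "(m(2 := mi s, B + s := mi s, 2 := 1, 0 := s - 1, 1 := B + s - 1, 2 := 3, 2 := 3 - (s - 1))) a = 0"
        using h a s3 by (auto simp: Inv_def s_def B_def)
    qed
    moreover have "(3 - (s - 1) = 0) = (Suc k < L - 2)" using k s_def by auto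
    ultimately show "Inv (Suc k) (execs rbody m) \<and> (execs rbody m 2 = 0 \<longleftrightarrow> Suc k < L - 2)" unfolding e by simp
  qed (auto simp: rbody_def)
  have b2: "HT (\<lambda>m. Inv 0 m \<and> m 2 = L - 2) (IfNZ 2 (DoWhile (Blk rbody) 2)) (1 + 8 * L) Fin"
  proof (rule HT_if)
    show "HT (\<lambda>m. (Inv 0 m \<and> m 2 = L - 2) \<and> m 2 \<noteq> 0) (DoWhile (Blk rbody) 2) (8 * L) Fin"
    proof (cases "L - 2 = 0")
      case True then show ?thesis by (auto simp: HT_def)
    next
      case False
      have "HT (Inv 0) (DoWhile (Blk rbody) 2) ((L - 2 - 0) * Suc 7) (Inv (L - 2))"
        by (rule HT_dowhile[OF bd]) (use False in auto)
      then show ?thesis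
      proof (rule HT_conseq)
        show "\<And>m. Inv (L - 2) m \<Longrightarrow> Fin m"
        proof -
          fix m assume h: "Inv (L - 2) m"
          have l2: "L - (L - 2) = 2" using False by simp
          have z: "\<forall>a. B + 2 \<le> a \<and> (a \<le> B + 2 \<or> B + L < a) \<longrightarrow> m a = 0" using h unfolding Inv_def l2 by blast
          have z2: "\<forall>a. B + L < a \<longrightarrow> m a = 0"
          proof (intro allI impI)
            fix a assume "B + L < a"
            moreover have "B + 2 \<le> a" using \<open>B + L < a\<close> L1 False by linarith
            ultimately show "m a = 0" using z by blast
          qed
          have i: "m 0 = 2" "m 1 = B + 2" using h l2 unfolding Inv_def by auto
          have i2: "\<forall>a. 3 \<le> a \<and> a \<le> L \<longrightarrow> m (B + a) = mi a" "m (B + 1) = mi 1" "m B = L"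
            using h l2 unfolding Inv_def by auto
          have i3: "m (B + 2) = 0" using z by simp
          show "Fin m" unfolding Fin_def using i i2 i3 z2 by simp
        qed
      qed auto
    qed
    show "\<And>m. Inv 0 m \<and> m 2 = L - 2 \<Longrightarrow> m 2 = 0 \<Longrightarrow> Fin m"
    proof -
      fix m assume h: "Inv 0 m \<and> m 2 = L - 2" "m 2 = 0"
      then have "L \<le> 2" by simp
      have i: "m 0 = L" "m 1 = B + L" "m (B + 1) = mi 1" "m B = L" using h unfolding Inv_def by auto
      have z: "\<forall>a. B + 2 \<le> a \<and> (a \<le> B + L \<or> B + L < a) \<longrightarrow> m a = 0" using h unfolding Inv_def by simp
      have z1: "m (B + 2) = 0" using z by (metis le_refl not_less)
      have z2: "\<forall>a. B + L < a \<longrightarrow> m a = 0"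
      proof (intro allI impI)
        fix a assume a: "B + L < a"
        then have "B + 2 \<le> a" using L1 by linarith
        then show "m a = 0" using z a by blast
      qed
      have v: "\<forall>a. 3 \<le> a \<and> a \<le> L \<longrightarrow> m (B + a) = mi a" using \<open>L \<le> 2\<close> by auto
      show "Fin m" unfolding Fin_def using i z1 z2 v by simp
    qed
  qed simp
  show ?thesis unfolding reloc_c_def
    by (rule HT_seq'[OF b1 HT_conseq[OF b2]]) (auto simp: Fin_def B_def)
qed



lemma nth_concat_const:
  assumes "\<forall>x\<in>set xs. length (g x) = k" "i < length xs" "j < k"
  shows "concat (map g xs) ! (i * k + j) = g (xs ! i) ! j"
  using assms
proof (induction xs arbitrary: i)
  case Nil then show ?case by simp
next
  case (Cons x xs)
  show ?case
  proof (cases i)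
    case 0 then show ?thesis using Cons.prems by (simp add: nth_append)
  next
    case (Suc i')
    have "concat (map g (x # xs)) ! (i * k + j) = concat (map g xs) ! (i' * k + j)"
      using Cons.prems Suc by (simp add: nth_append algebra_simps)
    also have "\<dots> = g (xs ! i') ! j" using Cons Suc by simp
    finally show ?thesis using Suc by simp
  qed
qed

lemma length_concat_const: "\<forall>x\<in>set xs. length (g x) = k \<Longrightarrow> length (concat (map g xs)) = length xs * k"
  by (induction xs) auto

lemma cube_nth:
  fixes f :: "nat \<Rightarrow> nat \<Rightarrow> nat \<Rightarrow> 'a"
  assumes "b < n" "c < n" "d < n"
  shows "[f b c d. b \<leftarrow> [0..<n], c \<leftarrow> [0..<n], d \<leftarrow> [0..<n]] ! (b * n * n + c * n + d) = f b c d"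
    and "length [f b c d. b \<leftarrow> [0..<n], c \<leftarrow> [0..<n], d \<leftarrow> [0..<n]] = n * n * n"
proof -
  have l1: "\<forall>b\<in>set [0..<n]. length (concat (map (\<lambda>c. map (\<lambda>d. f b c d) [0..<n]) [0..<n])) = n * n"
  proof
    fix b
    show "length (concat (map (\<lambda>c. map (\<lambda>d. f b c d) [0..<n]) [0..<n])) = n * n"
      using length_concat_const[of "[0..<n]" "\<lambda>c. map (\<lambda>d. f b c d) [0..<n]" n] by simp
  qed
  have "[f b c d. b \<leftarrow> [0..<n], c \<leftarrow> [0..<n], d \<leftarrow> [0..<n]] = concat (map (\<lambda>b. concat (map (\<lambda>c. map (\<lambda>d. f b c d) [0..<n]) [0..<n])) [0..<n])"
    by (simp add: concat_map_singleton)
  moreover have "concat (map (\<lambda>b. concat (map (\<lambda>c. map (\<lambda>d. f b c d) [0..<n]) [0..<n])) [0..<n]) ! (b * (n * n) + (c * n + d)) =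
      concat (map (\<lambda>c. map (\<lambda>d. f b c d) [0..<n]) [0..<n]) ! (c * n + d)"
    using nth_concat_const[OF l1, of b "c * n + d"] assms idx2_lt[of c n d] by simp
  moreover have "concat (map (\<lambda>c. map (\<lambda>d. f b c d) [0..<n]) [0..<n]) ! (c * n + d) = f b c d"
    using nth_concat_const[of "[0..<n]" "\<lambda>c. map (\<lambda>d. f b c d) [0..<n]" n c d] assms by simp
  ultimately show "[f b c d. b \<leftarrow> [0..<n], c \<leftarrow> [0..<n], d \<leftarrow> [0..<n]] ! (b * n * n + c * n + d) = f b c d"
    by (simp add: algebra_simps)
  show "length [f b c d. b \<leftarrow> [0..<n], c \<leftarrow> [0..<n], d \<leftarrow> [0..<n]] = n * n * n"
    using length_concat_const[OF l1] by (simp add: concat_map_singleton)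
qed



context inst begin

definition setup_c :: com where
  "setup_c = Seq (Blk [LoadC 3 1, Sub 22 1 0, Add 23 22 3, LoadI 4 23, Add 6 23 3, LoadC 5 0, LoadC 34 0, Add 34 34 4])
    (Seq (FOR 3 34 12 (Blk [Add 5 5 4]))
    (Seq (Blk [LoadC 36 0, LoadC 34 0, Add 34 34 4])
    (Seq (FOR 3 34 12 (Blk [Add 36 36 5])) (Blk [Add 7 6 36, Add 8 7 36, Add 9 8 5]))))"

definition SU :: "nat set" where "SU = {3..<40}"

lemma setup_spec:
  assumes h: "m1 1 - m1 0 = base" "m1 (base + 1) = n" "INP m1" "\<forall>a. db \<le> a \<longrightarrow> m1 a = 0"
  shows "HT (\<lambda>m. m = m1) setup_c (16 + 8 * n) (\<lambda>m. Bs m \<and> DM m (\<lambda>_ _. False))"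
proof -
  have b40: "40 \<le> base" by (simp add: base_def)
  define I1 where "I1 i m = (unch SU m1 m \<and> m 4 = n \<and> m 6 = pb \<and> m 5 = i * n)" for i m
  define I2 where "I2 i m = (unch SU m1 m \<and> m 4 = n \<and> m 6 = pb \<and> m 5 = n * n \<and> m 36 = i * (n * n))" for i m
  have s1: "HT (\<lambda>m. m = m1) (Blk [LoadC 3 1, Sub 22 1 0, Add 23 22 3, LoadI 4 23, Add 6 23 3, LoadC 5 0, LoadC 34 0, Add 34 34 4]) 8
     (\<lambda>m. I1 0 m \<and> m 34 = n \<and> m 3 = 1)"
    by (rule HT_blk') (use h b40 in \<open>auto simp: I1_def SU_def pb_def\<close>)
  have s2: "HT (\<lambda>m. I1 0 m \<and> m 34 = n \<and> m 3 = 1) (FOR 3 34 12 (Blk [Add 5 5 4])) (1 + n * 4) (\<lambda>m. I1 n m \<and> m 3 = 1)"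
  proof (rule HT_for)
    show "\<And>i. i < n \<Longrightarrow> HT (\<lambda>m. I1 i m \<and> m 34 = n - i \<and> m 3 = 1) (Blk [Add 5 5 4]) 1 (\<lambda>m. I1 (Suc i) m \<and> m 34 = n - i \<and> m 3 = 1)"
      by (rule HT_blk') (auto simp: I1_def SU_def)
    show "\<And>i m v w. I1 i m \<Longrightarrow> I1 i (m(34 := v, 12 := w))" by (simp add: I1_def SU_def)
  qed auto
  have s3: "HT (\<lambda>m. I1 n m \<and> m 3 = 1) (Blk [LoadC 36 0, LoadC 34 0, Add 34 34 4]) 3 (\<lambda>m. I2 0 m \<and> m 34 = n \<and> m 3 = 1)"
    by (rule HT_blk') (auto simp: I1_def I2_def SU_def algebra_simps)
  have s4: "HT (\<lambda>m. I2 0 m \<and> m 34 = n \<and> m 3 = 1) (FOR 3 34 12 (Blk [Add 36 36 5])) (1 + n * 4) (\<lambda>m. I2 n m \<and> m 3 = 1)"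
  proof (rule HT_for)
    show "\<And>i. i < n \<Longrightarrow> HT (\<lambda>m. I2 i m \<and> m 34 = n - i \<and> m 3 = 1) (Blk [Add 36 36 5]) 1 (\<lambda>m. I2 (Suc i) m \<and> m 34 = n - i \<and> m 3 = 1)"
      by (rule HT_blk') (auto simp: I2_def SU_def)
    show "\<And>i m v w. I2 i m \<Longrightarrow> I2 i (m(34 := v, 12 := w))" by (simp add: I2_def SU_def)
  qed auto
  have s5: "HT (\<lambda>m. I2 n m \<and> m 3 = 1) (Blk [Add 7 6 36, Add 8 7 36, Add 9 8 5]) 3 (\<lambda>m. Bs m \<and> DM m (\<lambda>_ _. False))"
  proof (rule HT_blk')
    fix m assume a: "I2 n m \<and> m 3 = 1"
    define m' where "m' = execs [Add 7 6 36, Add 8 7 36, Add 9 8 5] m"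
    have u: "unch SU m1 m'" using a by (simp add: m'_def I2_def SU_def)
    have "INP m'" by (rule INP_unch[OF h(3) u]) (auto simp: SU_def)
    moreover have "DM m' (\<lambda>_ _. False)"
    proof -
      have "m' (db + (x * n + y)) = m1 (db + (x * n + y))" for x y
        by (rule unch_D[OF u]) (use addr_facts in \<open>auto simp: SU_def\<close>)
      then show ?thesis using h(4) by (simp add: DM_def bit_def)
    qed
    moreover have "m' 3 = 1 \<and> m' 4 = n \<and> m' 5 = n * n \<and> m' 6 = pb \<and> m' 7 = rb \<and> m' 8 = db \<and> m' 9 = ob"
      using a by (simp add: m'_def I2_def rb_def db_def ob_def algebra_simps)
    ultimately show "Bs (execs [Add 7 6 36, Add 8 7 36, Add 9 8 5] m) \<and> DM (execs [Add 7 6 36, Add 8 7 36, Add 9 8 5] m) (\<lambda>_ _. False)"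
      unfolding m'_def[symmetric] by (simp add: Bs_def)
  qed auto
  show ?thesis unfolding setup_c_def
    by (rule HT_seq'[OF s1 HT_seq[OF s2 HT_seq[OF s3 HT_seq[OF s4 s5]]]]) simp
qed

end


definition whole :: com where
  "whole = Seq reloc_c (Seq inst.setup_c (Seq inst.main_c inst.final_c))"

context inst begin

lemma cube_len: "length [f b c d. b \<leftarrow> [0..<k], c \<leftarrow> [0..<k], d \<leftarrow> [0..<(k::nat)]] = k * k * k"
proof -
  have l1: "\<forall>b\<in>set [0..<k]. length (concat (map (\<lambda>c. map (\<lambda>d. f b c d) [0..<k]) [0..<k])) = k * k"
  proof
    fix b
    show "length (concat (map (\<lambda>c. map (\<lambda>d. f b c d) [0..<k]) [0..<k])) = k * k"
      using length_concat_const[of "[0..<k]" "\<lambda>c. map (\<lambda>d. f b c d) [0..<k]" k] by simp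
  qed
  show ?thesis using length_concat_const[OF l1] by simp
qed

lemma enc_len: "length (encode_smg n P R) = L"
  unfolding encode_smg_def L_def
  using cube_len[of "\<lambda>b c d. bit (P b c d)" n] cube_len[of "\<lambda>c b b'. bit (R c b b')" n] by simp

lemma enc_0: "encode_smg n P R ! 0 = n"
  by (simp add: encode_smg_def)

lemma enc_P: "b < n \<Longrightarrow> c < n \<Longrightarrow> d < n \<Longrightarrow> encode_smg n P R ! (1 + (b * n * n + c * n + d)) = bit (P b c d)"
proof -
  assume a: "b < n" "c < n" "d < n"
  let ?A = "[bit (P b c d). b \<leftarrow> [0..<n], c \<leftarrow> [0..<n], d \<leftarrow> [0..<n]]"
  let ?B = "[bit (R c b b'). c \<leftarrow> [0..<n], b \<leftarrow> [0..<n], b' \<leftarrow> [0..<n]]"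
  have l: "b * n * n + c * n + d < length ?A" using idx3_lt[OF a] cube_nth(2)[OF a, of "\<lambda>b c d. bit (P b c d)"] by simp
  have "encode_smg n P R ! (1 + (b * n * n + c * n + d)) = (?A @ ?B) ! (b * n * n + c * n + d)"
    by (simp add: encode_smg_def)
  also have "\<dots> = ?A ! (b * n * n + c * n + d)" using l by (simp add: nth_append)
  also have "\<dots> = bit (P b c d)" using cube_nth(1)[OF a, of "\<lambda>b c d. bit (P b c d)"] by simp
  finally show ?thesis .
qed

lemma enc_R: "c < n \<Longrightarrow> x < n \<Longrightarrow> y < n \<Longrightarrow> encode_smg n P R ! (1 + n * n * n + (c * n * n + x * n + y)) = bit (R c x y)"
proof -
  assume a: "c < n" "x < n" "y < n"
  let ?A = "[bit (P b c d). b \<leftarrow> [0..<n], c \<leftarrow> [0..<n], d \<leftarrow> [0..<n]]"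
  let ?B = "[bit (R c b b'). c \<leftarrow> [0..<n], b \<leftarrow> [0..<n], b' \<leftarrow> [0..<n]]"
  have l: "length ?A = n * n * n" using cube_len[of "\<lambda>b c d. bit (P b c d)" n] by simp
  have "encode_smg n P R ! (1 + n * n * n + (c * n * n + x * n + y)) = (?A @ ?B) ! (n * n * n + (c * n * n + x * n + y))"
    by (simp add: encode_smg_def)
  also have "\<dots> = ?B ! (c * n * n + x * n + y)" using l by (simp add: nth_append)
  also have "\<dots> = bit (R c x y)" using cube_nth(1)[OF a, of "\<lambda>c b b'. bit (R c b b')"] by simp
  finally show ?thesis .
qed

lemma INP_init:
  assumes h1: "\<forall>a. 3 \<le> a \<and> a \<le> L \<longrightarrow> m (base + a) = mi a" and h2: "m (base + 2) = 0"
    and h3: "\<forall>a. 1 \<le> a \<and> a \<le> L \<longrightarrow> mi a = encode_smg n P R ! (a - 1)"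
  shows "INP m"
  unfolding INP_def
proof (intro conjI allI impI)
  fix b c d assume a: "b < n" "c < n" "d < n"
  define idx where "idx = b * n * n + c * n + d"
  have il: "idx < n * n * n" using idx3_lt[OF a] idx_def by simp
  have e: "pb + idx = base + (2 + idx)" by (simp add: pb_def)
  show "m (pb + (b * n * n + c * n + d)) = bit (P b c d)"
  proof (cases "idx = 0")
    case True
    then have "b = 0" "c = 0" "d = 0" using a unfolding idx_def by auto
    then show ?thesis using h2 irr[of 0 0] a True e unfolding idx_def by (simp add: bit_def)
  next
    case False
    have "2 + idx \<le> L" using il unfolding L_def by simp
    moreover have "3 \<le> 2 + idx" using False by simp
    ultimately have "m (base + (2 + idx)) = mi (2 + idx)" using h1 by blast
    also have "\<dots> = encode_smg n P R ! (1 + idx)" using h3 \<open>2 + idx \<le> L\<close> by simp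
    finally show ?thesis using e enc_P[OF a] unfolding idx_def by simp
  qed
next
  fix c x y assume a: "c < n" "x < n" "y < n"
  define idx where "idx = c * n * n + x * n + y"
  have il: "idx < n * n * n" using idx3_lt[OF a] idx_def by simp
  have "0 < n" using a by simp
  then have "0 < n * n * n" by simp
  then have n1: "1 \<le> n * n * n" by linarith
  have e: "rb + idx = base + (2 + n * n * n + idx)" by (simp add: rb_def pb_def)
  have "2 + n * n * n + idx \<le> L" using il unfolding L_def by simp
  moreover have "3 \<le> 2 + n * n * n + idx" using n1 by linarith
  ultimately have "m (base + (2 + n * n * n + idx)) = mi (2 + n * n * n + idx)" using h1 by blast
  also have "\<dots> = encode_smg n P R ! (1 + n * n * n + idx)" using h3 \<open>2 + n * n * n + idx \<le> L\<close> by simp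
  finally show "m (rb + (c * n * n + x * n + y)) = bit (R c x y)" using e enc_R[OF a] unfolding idx_def by (simp add: add.assoc)
qed

lemma whole_spec:
  shows "HT (\<lambda>m. m = snd (init_config (encode_smg n P R))) whole (300 * Suc L ^ 5)
     (\<lambda>m. correct_output n P R (map (\<lambda>i. m (Suc i)) [0..<m 0]))"
proof -
  define mi where "mi = snd (init_config (encode_smg n P R))"
  have L1: "1 \<le> L" by (simp add: L_def)
  have mi0: "mi 0 = L" by (simp add: mi_def init_config_def enc_len)
  have miz: "\<And>a. L < a \<Longrightarrow> mi a = 0" by (simp add: mi_def init_config_def enc_len)
  have mi1: "mi 1 = n" using L1 by (simp add: mi_def init_config_def enc_len enc_0)
  have mie: "\<forall>a. 1 \<le> a \<and> a \<le> L \<longrightarrow> mi a = encode_smg n P R ! (a - 1)" by (auto simp: mi_def init_config_def enc_len)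
  have r: "HT (\<lambda>m. m = mi) reloc_c (10 + 8 * L) (\<lambda>m. m 1 - m 0 = L + 41 \<and> (\<forall>a. 3 \<le> a \<and> a \<le> L \<longrightarrow> m (L + 41 + a) = mi a)
     \<and> m (L + 41 + 1) = mi 1 \<and> m (L + 41) = L \<and> m (L + 41 + 2) = 0 \<and> (\<forall>a. L + 41 + L < a \<longrightarrow> m a = 0))"
    by (rule reloc_spec[of L mi, OF L1 mi0 miz])
  have bL: "base = L + 41" by (simp add: base_def)
  have dbL: "db = base + L + 1" by (simp add: db_def rb_def pb_def L_def)
  have s: "HT (\<lambda>m. m 1 - m 0 = L + 41 \<and> (\<forall>a. 3 \<le> a \<and> a \<le> L \<longrightarrow> m (L + 41 + a) = mi a)
     \<and> m (L + 41 + 1) = mi 1 \<and> m (L + 41) = L \<and> m (L + 41 + 2) = 0 \<and> (\<forall>a. L + 41 + L < a \<longrightarrow> m a = 0))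
     setup_c (16 + 8 * n) (\<lambda>m. Bs m \<and> DM m (\<lambda>_ _. False))"
  proof (rule HT_point)
    fix m1 assume h: "m1 1 - m1 0 = L + 41 \<and> (\<forall>a. 3 \<le> a \<and> a \<le> L \<longrightarrow> m1 (L + 41 + a) = mi a)
     \<and> m1 (L + 41 + 1) = mi 1 \<and> m1 (L + 41) = L \<and> m1 (L + 41 + 2) = 0 \<and> (\<forall>a. L + 41 + L < a \<longrightarrow> m1 a = 0)"
    have inp: "INP m1" by (rule INP_init[of m1 mi]) (use h bL mie in auto)
    have z: "\<forall>a. db \<le> a \<longrightarrow> m1 a = 0" using h bL dbL by auto
    show "HT (\<lambda>m. m = m1) setup_c (16 + 8 * n) (\<lambda>m. Bs m \<and> DM m (\<lambda>_ _. False))"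
      by (rule setup_spec) (use h bL mi1 inp z in auto)
  qed
  have mn: "HT (\<lambda>m. Bs m \<and> DM m (\<lambda>_ _. False)) main_c (95 * Suc n ^ 5) (\<lambda>m. Bs m \<and> DM m (Dfin n P R))"
  proof (rule HT_point)
    fix m1 assume h: "Bs m1 \<and> DM m1 (\<lambda>_ _. False)"
    show "HT (\<lambda>m. m = m1) main_c (95 * Suc n ^ 5) (\<lambda>m. unch S_mn m1 m \<and> DM m (Dfin n P R))"
      using main_spec h by blast
  next
    fix m1 m assume h: "Bs m1 \<and> DM m1 (\<lambda>_ _. False)" "unch S_mn m1 m \<and> DM m (Dfin n P R)"
    have "Bs m" by (rule Bs_unch[of m1 S_mn]) (use h in \<open>auto simp: S_mn_def\<close>)
    then show "Bs m \<and> DM m (Dfin n P R)" using h by simp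
  qed
  have fn: "HT (\<lambda>m. Bs m \<and> DM m (Dfin n P R)) final_c (64 * Suc n ^ 2) (\<lambda>m. map (\<lambda>i. m (Suc i)) [0..<m 0] = res (Dfin n P R))"
    by (rule HT_point[OF final_spec]) auto
  have rr: "res (Dfin n P R) = result n P R" by (simp add: res_def result_def)
  have nL: "Suc n \<le> Suc L" unfolding L_def
  proof -
    have h: "n \<le> n * n * n" by (cases n) auto
    show "Suc n \<le> Suc (1 + 2 * (n * n * n))" using h by linarith
  qed
  have p5: "Suc n ^ 5 \<le> Suc L ^ 5" "Suc n ^ 2 \<le> Suc L ^ 5" "Suc L \<le> Suc L ^ 5"
  proof -
    show a: "Suc n ^ 5 \<le> Suc L ^ 5" using nL by (rule power_mono) simp
    have "Suc n ^ 2 \<le> Suc n ^ 5" by (rule power_increasing) auto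
    then show "Suc n ^ 2 \<le> Suc L ^ 5" using a by (rule order_trans)
    have "Suc L ^ 1 \<le> Suc L ^ 5" by (rule power_increasing) auto
    then show "Suc L \<le> Suc L ^ 5" by simp
  qed
  have tb: "10 + 8 * L + (16 + 8 * n + (95 * Suc n ^ 5 + 64 * Suc n ^ 2)) \<le> 300 * Suc L ^ 5"
  proof -
    have "n \<le> Suc L ^ 5" using nL p5(3) by simp
    then show ?thesis using p5 by linarith
  qed
  show ?thesis unfolding whole_def mi_def[symmetric]
    by (rule HT_seq'[OF r HT_seq[OF s HT_seq[OF mn HT_conseq[OF fn]]]]) (use rr result_correct tb in auto)
qed

end

theorem theorem2:
  shows "\<exists>(prog :: instr list) (c :: nat) (k :: nat).
    \<forall>n pref R. smg_instance n pref R \<and> asymmetric_prefs n R \<longrightarrow>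
      (\<exists>t \<le> c * (length (encode_smg n pref R) + 1) ^ k.
         halted prog (run prog t (init_config (encode_smg n pref R)))
         \<and> correct_output n pref R
             (output_of (run prog t (init_config (encode_smg n pref R)))))"
proof -
  have main: "\<forall>n pref R. smg_instance n pref R \<and> asymmetric_prefs n R \<longrightarrow>
      (\<exists>t \<le> 300 * (length (encode_smg n pref R) + 1) ^ 5.
         halted (comp 0 whole) (run (comp 0 whole) t (init_config (encode_smg n pref R)))
         \<and> correct_output n pref R (output_of (run (comp 0 whole) t (init_config (encode_smg n pref R)))))"
  proof (intro allI impI)
    fix n pref R assume a: "smg_instance n pref R \<and> asymmetric_prefs n R"
    then interpret inst n pref R by unfold_locales auto
    have ic: "init_config (encode_smg n pref R) = (0, snd (init_config (encode_smg n pref R)))"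
      by (simp add: init_config_def)
    obtain t m' where b: "big whole (snd (init_config (encode_smg n pref R))) t m'" "t \<le> 300 * Suc L ^ 5"
        "correct_output n pref R (map (\<lambda>i. m' (Suc i)) [0..<m' 0])"
      using whole_spec unfolding HT_def by blast
    note bp = big_prog[OF b(1)]
    show "\<exists>t \<le> 300 * (length (encode_smg n pref R) + 1) ^ 5.
         halted (comp 0 whole) (run (comp 0 whole) t (init_config (encode_smg n pref R)))
         \<and> correct_output n pref R (output_of (run (comp 0 whole) t (init_config (encode_smg n pref R))))"
      using b bp ic enc_len by (intro exI[of _ t]) (auto simp: output_of_def)
  qed
  then show ?thesis by blast
qed



end
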